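(* In the setting of the context, assume that $\hat p^D$ is bounded away from zero and infinity on $D$. Let $(\hat{\mathbf{f}}_j)$ be a solution of the SBF system satisfying the SBF constraints and $(\hat{\mathbf{f}}^{[r]}_j)$ the SBF algorithm iterates. Then (i) there exist $\tilde c_2>0$, $\tilde\varrho_2\in(0,1)$ such that $\int_{D_j}\|\hat{\mathbf{f}}^{[r]}_j(x_j)\ominus\hat{\mathbf{f}}_j(x_j)\|^2dx_j\le\tilde c_2\tilde\varrho_2^r$ for all $1\le j\le d$, $r\ge0$; (ii) $\|\hat{\mathbf{f}}^{[r]}_j(x_j)\ominus\hat{\mathbf{f}}_j(x_j)\|\to0$ for Lebesgue-a.e. $x_j\in D_j$, for all $j$; (iii) for each $j$ and $\varepsilon>0$ there is a Borel $S_j(\varepsilon)\subset D_j$ with Lebesgue measure of $D_j\setminus S_j(\varepsilon)$ less than $\varepsilon$ and $\sup_{x_j\in S_j(\varepsilon)}\|\hat{\mathbf{f}}^{[r]}_j(x_j)\ominus\hat{\mathbf{f}}_j(x_j)\|\to0$ as $r\to\infty$.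
   Context: $\mathbb{H}$ separable real Hilbert space ($\oplus,\odot,\ominus,\mathbf{0},\|\cdot\|$; Bochner integrals). Compact $D_j\subset\mathbb{R}^{L_j}$, $D=\prod D_j$. Data $(\tilde\xi^i,\tilde{\mathbf{Y}}^i)$, $i\le n$; bandwidths $h_j>0$; continuous $K_j\ge0$, positive on $[0,1)$, zero on $[1,\infty)$; $K_{h_j}(x_j,u_j)=h_j^{-L_j}K_j(\|x_j-u_j\|_j/h_j)/\int_{D_j}h_j^{-L_j}K_j(\|t_j-u_j\|_j/h_j)dt_j$ (or $|D_j|^{-1}$ if the denominator vanishes). $\hat p_0^D=n^{-1}\sum_iI(\tilde\xi^i\in D)>0$; $\hat{\mathbf{f}}_0=(\hat p_0^Dn)^{-1}\odot\bigoplus_i\tilde{\mathbf{Y}}^i\odot I(\tilde\xi^i\in D)$; $\hat p^D(\mathbf{x})=(\hat p_0^Dn)^{-1}\sum_i\prod_jK_{h_j}(x_j,\tilde\xi^i_j)I(\tilde\xi^i\in D)$; $\hat p^D_j$, $\hat p^D_{jk}$ the same with only the $j$ (resp. $j,k$) factors; $\hat{\mathbf{m}}_j(x_j)=(\hat p^D_j(x_j)\hat p_0^Dn)^{-1}\odot\bigoplus_i\tilde{\mathbf{Y}}^i\odot(K_{h_j}(x_j,\tilde\xi^i_j)I(\tilde\xi^i\in D))$. SBF system: $\hat{\mathbf{f}}_j(x_j)=\hat{\mathbf{m}}_j(x_j)\ominus\hat{\mathbf{f}}_0\ominus\bigoplus_{k\ne j}\int_{D_k}\hat{\mathbf{f}}_k(x_k)\odot\frac{\hat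 p^D_{jk}(x_j,x_k)}{\hat p^D_j(x_j)}dx_k$; constraints $\int_{D_j}\hat{\mathbf{f}}_j\odot\hat p^D_j=\mathbf{0}$, $\int\|\hat{\mathbf{f}}_j\|^2\hat p^D_j<\infty$. SBF algorithm: initial $(\hat{\mathbf{f}}^{[0]}_j)$ satisfying the constraints; for $r\ge1$, $j=1,\dots,d$: $\hat{\mathbf{f}}^{[r]}_j=\hat{\mathbf{m}}_j\ominus\hat{\mathbf{f}}_0\ominus\bigoplus_{k<j}\int\hat{\mathbf{f}}^{[r]}_k\odot\frac{\hat p^D_{jk}}{\hat p^D_j}dx_k\ominus\bigoplus_{k>j}\int\hat{\mathbf{f}}^{[r-1]}_k\odot\frac{\hat p^D_{jk}}{\hat p^D_j}dx_k$. *)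

theory Defs
  imports "HOL-Analysis.Analysis"
begin

text \<open>Points of R^{L_j} are represented as extensional functions nat => real
  supported on {..<L j}; Lebesgue measure on R^{L_j} is the product of lborel.\<close>

definition lebL :: "(nat \<Rightarrow> nat) \<Rightarrow> nat \<Rightarrow> (nat \<Rightarrow> real) measure" where
  "lebL L j = PiM {..<L j} (\<lambda>_. lborel)"

definition distL :: "(nat \<Rightarrow> nat) \<Rightarrow> nat \<Rightarrow> (nat \<Rightarrow> real) \<Rightarrow> (nat \<Rightarrow> real) \<Rightarrow> real" where
  "distL L j x u = sqrt (\<Sum>i<L j. (x i - u i)\<^sup>2)"

definition sbf_Kh :: "(nat \<Rightarrow> nat) \<Rightarrow> (nat \<Rightarrow> (nat \<Rightarrow> real) set) \<Rightarrow> (nat \<Rightarrow> real)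
    \<Rightarrow> (nat \<Rightarrow> real \<Rightarrow> real) \<Rightarrow> nat \<Rightarrow> (nat \<Rightarrow> real) \<Rightarrow> (nat \<Rightarrow> real) \<Rightarrow> real" where
  "sbf_Kh L D h K j x u =
     (let g = (\<lambda>t. K j (distL L j t u / h j) / h j ^ L j);
          den = (LINT t : D j | lebL L j. g t)
      in if den = 0 then 1 / measure (lebL L j) (D j) else g x / den)"

definition sbf_inD :: "nat \<Rightarrow> (nat \<Rightarrow> (nat \<Rightarrow> real) set) \<Rightarrow> (nat \<Rightarrow> nat \<Rightarrow> nat \<Rightarrow> real) \<Rightarrow> nat \<Rightarrow> bool" where
  "sbf_inD d D \<xi> i = (\<forall>j\<in>{1..d}. \<xi> i j \<in> D j)"

definition sbf_p0 :: "nat \<Rightarrow> nat \<Rightarrow> (nat \<Rightarrow> (nat \<Rightarrow> real) set) \<Rightarrow> (nat \<Rightarrow> nat \<Rightarrow> nat \<Rightarrow> real) \<Rightarrow> real" where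
  "sbf_p0 d n D \<xi> = (\<Sum>i<n. of_bool (sbf_inD d D \<xi> i)) / real n"

definition sbf_f0 :: "nat \<Rightarrow> nat \<Rightarrow> (nat \<Rightarrow> (nat \<Rightarrow> real) set) \<Rightarrow> (nat \<Rightarrow> nat \<Rightarrow> nat \<Rightarrow> real)
    \<Rightarrow> (nat \<Rightarrow> 'h::real_vector) \<Rightarrow> 'h" where
  "sbf_f0 d n D \<xi> Y = inverse (sbf_p0 d n D \<xi> * real n) *\<^sub>R
      (\<Sum>i<n. of_bool (sbf_inD d D \<xi> i) *\<^sub>R Y i)"

definition sbf_p :: "(nat \<Rightarrow> nat) \<Rightarrow> (nat \<Rightarrow> (nat \<Rightarrow> real) set) \<Rightarrow> (nat \<Rightarrow> real) \<Rightarrow> (nat \<Rightarrow> real \<Rightarrow> real)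
    \<Rightarrow> nat \<Rightarrow> nat \<Rightarrow> (nat \<Rightarrow> nat \<Rightarrow> nat \<Rightarrow> real) \<Rightarrow> (nat \<Rightarrow> nat \<Rightarrow> real) \<Rightarrow> real" where
  "sbf_p L D h K d n \<xi> x = inverse (sbf_p0 d n D \<xi> * real n) *
      (\<Sum>i<n. (\<Prod>j\<in>{1..d}. sbf_Kh L D h K j (x j) (\<xi> i j)) * of_bool (sbf_inD d D \<xi> i))"

definition sbf_p1 :: "(nat \<Rightarrow> nat) \<Rightarrow> (nat \<Rightarrow> (nat \<Rightarrow> real) set) \<Rightarrow> (nat \<Rightarrow> real) \<Rightarrow> (nat \<Rightarrow> real \<Rightarrow> real)
    \<Rightarrow> nat \<Rightarrow> nat \<Rightarrow> (nat \<Rightarrow> nat \<Rightarrow> nat \<Rightarrow> real) \<Rightarrow> nat \<Rightarrow> (nat \<Rightarrow> real) \<Rightarrow> real" where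
  "sbf_p1 L D h K d n \<xi> j xj = inverse (sbf_p0 d n D \<xi> * real n) *
      (\<Sum>i<n. sbf_Kh L D h K j xj (\<xi> i j) * of_bool (sbf_inD d D \<xi> i))"

definition sbf_p2 :: "(nat \<Rightarrow> nat) \<Rightarrow> (nat \<Rightarrow> (nat \<Rightarrow> real) set) \<Rightarrow> (nat \<Rightarrow> real) \<Rightarrow> (nat \<Rightarrow> real \<Rightarrow> real)
    \<Rightarrow> nat \<Rightarrow> nat \<Rightarrow> (nat \<Rightarrow> nat \<Rightarrow> nat \<Rightarrow> real) \<Rightarrow> nat \<Rightarrow> nat \<Rightarrow> (nat \<Rightarrow> real) \<Rightarrow> (nat \<Rightarrow> real) \<Rightarrow> real" where
  "sbf_p2 L D h K d n \<xi> j k xj xk = inverse (sbf_p0 d n D \<xi> * real n) *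
      (\<Sum>i<n. sbf_Kh L D h K j xj (\<xi> i j) * sbf_Kh L D h K k xk (\<xi> i k) * of_bool (sbf_inD d D \<xi> i))"

definition sbf_m :: "(nat \<Rightarrow> nat) \<Rightarrow> (nat \<Rightarrow> (nat \<Rightarrow> real) set) \<Rightarrow> (nat \<Rightarrow> real) \<Rightarrow> (nat \<Rightarrow> real \<Rightarrow> real)
    \<Rightarrow> nat \<Rightarrow> nat \<Rightarrow> (nat \<Rightarrow> nat \<Rightarrow> nat \<Rightarrow> real) \<Rightarrow> (nat \<Rightarrow> 'h::real_vector) \<Rightarrow> nat \<Rightarrow> (nat \<Rightarrow> real) \<Rightarrow> 'h" where
  "sbf_m L D h K d n \<xi> Y j xj = inverse (sbf_p1 L D h K d n \<xi> j xj * sbf_p0 d n D \<xi> * real n) *\<^sub>R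
      (\<Sum>i<n. (sbf_Kh L D h K j xj (\<xi> i j) * of_bool (sbf_inD d D \<xi> i)) *\<^sub>R Y i)"

definition sbf_proj :: "(nat \<Rightarrow> nat) \<Rightarrow> (nat \<Rightarrow> (nat \<Rightarrow> real) set) \<Rightarrow> (nat \<Rightarrow> real) \<Rightarrow> (nat \<Rightarrow> real \<Rightarrow> real)
    \<Rightarrow> nat \<Rightarrow> nat \<Rightarrow> (nat \<Rightarrow> nat \<Rightarrow> nat \<Rightarrow> real) \<Rightarrow> nat \<Rightarrow> nat
    \<Rightarrow> ((nat \<Rightarrow> real) \<Rightarrow> 'h::{banach,second_countable_topology}) \<Rightarrow> (nat \<Rightarrow> real) \<Rightarrow> 'h" where
  "sbf_proj L D h K d n \<xi> j k g xj =
     (LINT t : D k | lebL L k. (sbf_p2 L D h K d n \<xi> j k xj t / sbf_p1 L D h K d n \<xi> j xj) *\<^sub>R g t)"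

definition sbf_constraint :: "(nat \<Rightarrow> nat) \<Rightarrow> (nat \<Rightarrow> (nat \<Rightarrow> real) set) \<Rightarrow> (nat \<Rightarrow> real) \<Rightarrow> (nat \<Rightarrow> real \<Rightarrow> real)
    \<Rightarrow> nat \<Rightarrow> nat \<Rightarrow> (nat \<Rightarrow> nat \<Rightarrow> nat \<Rightarrow> real) \<Rightarrow> nat
    \<Rightarrow> ((nat \<Rightarrow> real) \<Rightarrow> 'h::{banach,second_countable_topology}) \<Rightarrow> bool" where
  "sbf_constraint L D h K d n \<xi> j g \<longleftrightarrow>
     g \<in> borel_measurable (lebL L j) \<and>
     (LINT t : D j | lebL L j. sbf_p1 L D h K d n \<xi> j t *\<^sub>R g t) = 0 \<and>
     (\<integral>\<^sup>+ t \<in> D j. ennreal ((norm (g t))\<^sup>2 * sbf_p1 L D h K d n \<xi> j t) \<partial>lebL L j) < \<infinity>"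

end

theory Submission
  imports Defs
begin

lemma aux_le_sq: "(x::real) \<le> 1 + x\<^sup>2"
proof -
  have "0 \<le> (x - 1)\<^sup>2" by simp
  then have "2 * x \<le> x\<^sup>2 + 1" by (simp add: power2_eq_square algebra_simps)
  moreover have "0 \<le> x\<^sup>2" by simp
  ultimately show ?thesis by linarith
qed

lemma aux_mult_sq: "(x::real) * y \<le> x\<^sup>2 + y\<^sup>2"
proof -
  have "0 \<le> (x - y)\<^sup>2" by simp
  then have "2 * (x * y) \<le> x\<^sup>2 + y\<^sup>2" by (simp add: power2_eq_square algebra_simps)
  moreover have "0 \<le> x\<^sup>2" "0 \<le> y\<^sup>2" by simp_all
  ultimately show ?thesis by linarith
qed

lemma aux_sum_sq: "((x::real) + y)\<^sup>2 \<le> 2 * x\<^sup>2 + 2 * y\<^sup>2"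
proof -
  have "0 \<le> (x - y)\<^sup>2" by simp
  then show ?thesis by (simp add: power2_eq_square algebra_simps)
qed

locale sbfc =
  fixes d :: nat and I :: "nat set" and M :: "nat \<Rightarrow> 'x measure"
    and \<kappa> :: "nat \<Rightarrow> nat \<Rightarrow> 'x \<Rightarrow> real" and a B \<eta> :: real
  assumes finI: "finite I" and Ine: "I \<noteq> {}" and a_pos: "0 < a" and eta_pos: "0 < \<eta>"
    and finM: "\<And>k. k \<in> {1..d} \<Longrightarrow> finite_measure (M k)"
    and kmeas: "\<And>k i. k \<in> {1..d} \<Longrightarrow> i \<in> I \<Longrightarrow> \<kappa> k i \<in> borel_measurable (M k)"
    and knn: "\<And>k i t. k \<in> {1..d} \<Longrightarrow> i \<in> I \<Longrightarrow> t \<in> space (M k) \<Longrightarrow> 0 \<le> \<kappa> k i t"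
    and kbd: "\<And>k i t. k \<in> {1..d} \<Longrightarrow> i \<in> I \<Longrightarrow> t \<in> space (M k) \<Longrightarrow> \<kappa> k i t \<le> B"
    and kint: "\<And>k i. k \<in> {1..d} \<Longrightarrow> i \<in> I \<Longrightarrow> integral\<^sup>L (M k) (\<kappa> k i) = 1"
    and cover: "\<And>x. (\<And>k. k \<in> {1..d} \<Longrightarrow> x k \<in> space (M k)) \<Longrightarrow> \<exists>i\<in>I. \<forall>k\<in>{1..d}. \<eta> \<le> \<kappa> k i (x k)"
begin

definition p1 :: "nat \<Rightarrow> 'x \<Rightarrow> real" where "p1 k t = a * (\<Sum>i\<in>I. \<kappa> k i t)"
definition psi :: "nat \<Rightarrow> nat \<Rightarrow> 'x \<Rightarrow> real" where "psi k i t = a * \<kappa> k i t / p1 k t"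
definition mn :: "nat \<Rightarrow> nat \<Rightarrow> ('x \<Rightarrow> 'h::{real_inner,banach,second_countable_topology}) \<Rightarrow> 'h"
  where "mn k i g = (\<integral>t. \<kappa> k i t *\<^sub>R g t \<partial>M k)"
definition PP :: "nat \<Rightarrow> (nat \<Rightarrow> 'h::{real_inner,banach,second_countable_topology}) \<Rightarrow> 'x \<Rightarrow> 'h"
  where "PP k v t = (\<Sum>i\<in>I. psi k i t *\<^sub>R v i)"
definition QI :: "nat \<Rightarrow> nat \<Rightarrow> ('x \<Rightarrow> 'h::{real_inner,banach,second_countable_topology}) \<Rightarrow> ('x \<Rightarrow> 'h) \<Rightarrow> real"
  where "QI k i g g' = (\<integral>t. \<kappa> k i t * inner (g t) (g' t) \<partial>M k)"
definition nrm :: "nat \<Rightarrow> ('x \<Rightarrow> 'h::{real_inner,banach,second_countable_topology}) \<Rightarrow> real"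
  where "nrm k g = (\<Sum>i\<in>I. a * QI k i g g)"
definition good :: "nat \<Rightarrow> ('x \<Rightarrow> 'h::{real_inner,banach,second_countable_topology}) \<Rightarrow> bool"
  where "good k g \<longleftrightarrow> g \<in> borel_measurable (M k) \<and> integrable (M k) (\<lambda>t. (norm (g t))\<^sup>2)"
definition cons :: "nat \<Rightarrow> ('x \<Rightarrow> 'h::{real_inner,banach,second_countable_topology}) \<Rightarrow> bool"
  where "cons k g \<longleftrightarrow> (\<Sum>i\<in>I. mn k i g) = 0"
definition EE :: "(nat \<Rightarrow> 'x \<Rightarrow> 'h::{real_inner,banach,second_countable_topology}) \<Rightarrow> real"
  where "EE G = (\<Sum>i\<in>I. a * ((\<Sum>k\<in>{1..d}. QI k i (G k) (G k) - (norm (mn k i (G k)))\<^sup>2)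
                     + (norm (\<Sum>k\<in>{1..d}. mn k i (G k)))\<^sup>2))"

lemma space_ne: assumes "k \<in> {1..d}" shows "space (M k) \<noteq> {}"
proof
  assume e: "space (M k) = {}"
  obtain i where "i \<in> I" using Ine by auto
  have "integral\<^sup>L (M k) (\<kappa> k i) = 0"
    by (rule integral_eq_zero_AE, rule AE_I2) (simp add: e)
  with kint[OF assms \<open>i\<in>I\<close>] show False by simp
qed

lemma p1_lower: assumes k: "k \<in> {1..d}" and t: "t \<in> space (M k)" shows "a * \<eta> \<le> p1 k t"
proof -
  have "\<forall>m\<in>{1..d}. \<exists>s. s \<in> space (M m)" using space_ne by blast
  then obtain y where y: "\<And>m. m \<in> {1..d} \<Longrightarrow> y m \<in> space (M m)" by metis
  define x where "x = y(k := t)"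
  have "\<And>m. m \<in> {1..d} \<Longrightarrow> x m \<in> space (M m)" using y t by (auto simp: x_def)
  from cover[OF this] obtain i where i: "i \<in> I" "\<forall>m\<in>{1..d}. \<eta> \<le> \<kappa> m i (x m)" by blast
  have "\<eta> \<le> \<kappa> k i (x k)" using i(2) k by blast
  then have "\<eta> \<le> \<kappa> k i t" by (simp add: x_def)
  also have "\<kappa> k i t \<le> (\<Sum>i\<in>I. \<kappa> k i t)"
    by (rule member_le_sum) (use i knn k t finI in auto)
  finally show ?thesis unfolding p1_def using a_pos by simp
qed

lemma p1_pos: "k \<in> {1..d} \<Longrightarrow> t \<in> space (M k) \<Longrightarrow> 0 < p1 k t"
  using p1_lower[of k t] a_pos eta_pos by (smt (verit) mult_pos_pos)

lemma psi_nn: "k \<in> {1..d} \<Longrightarrow> i \<in> I \<Longrightarrow> t \<in> space (M k) \<Longrightarrow> 0 \<le> psi k i t"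
  unfolding psi_def using p1_pos[of k t] knn[of k i t] a_pos by simp

lemma psi_sum: "k \<in> {1..d} \<Longrightarrow> t \<in> space (M k) \<Longrightarrow> (\<Sum>i\<in>I. psi k i t) = 1"
proof -
  assume k: "k \<in> {1..d}" and t: "t \<in> space (M k)"
  have "(\<Sum>i\<in>I. psi k i t) = (\<Sum>i\<in>I. a * \<kappa> k i t) / p1 k t"
    unfolding psi_def by (simp add: sum_divide_distrib)
  also have "\<dots> = 1" using p1_pos[OF k t] by (simp add: p1_def sum_distrib_left)
  finally show ?thesis .
qed

lemma psi_le1: assumes "k \<in> {1..d}" "i \<in> I" "t \<in> space (M k)" shows "psi k i t \<le> 1"
proof -
  have "psi k i t \<le> (\<Sum>i\<in>I. psi k i t)"
    by (rule member_le_sum) (use assms psi_nn finI in auto)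
  then show ?thesis using psi_sum assms by simp
qed

lemma p1_meas[measurable]: "k \<in> {1..d} \<Longrightarrow> p1 k \<in> borel_measurable (M k)"
  unfolding p1_def[abs_def] using kmeas by measurable

lemma psi_meas[measurable]: "k \<in> {1..d} \<Longrightarrow> i \<in> I \<Longrightarrow> psi k i \<in> borel_measurable (M k)"
  unfolding psi_def[abs_def] using kmeas p1_meas by measurable

lemma kappa_psi: "k \<in> {1..d} \<Longrightarrow> l \<in> I \<Longrightarrow> t \<in> space (M k) \<Longrightarrow> (\<Sum>i\<in>I. a * \<kappa> k i t * psi k l t) = a * \<kappa> k l t"
proof -
  assume k: "k \<in> {1..d}" and l: "l \<in> I" and t: "t \<in> space (M k)"
  have "(\<Sum>i\<in>I. a * \<kappa> k i t * psi k l t) = p1 k t * psi k l t"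
    by (simp add: p1_def sum_distrib_left sum_distrib_right)
  also have "\<dots> = a * \<kappa> k l t" using p1_pos[OF k t] by (simp add: psi_def)
  finally show ?thesis .
qed

lemma fm: "k \<in> {1..d} \<Longrightarrow> finite_measure (M k)" by (rule finM)

lemma int_const: "k \<in> {1..d} \<Longrightarrow> integrable (M k) (\<lambda>t. c::real)"
  using finite_measure.integrable_const[OF finM] by blast

lemma good_int_kg:
  fixes g :: "'x \<Rightarrow> 'h::{real_inner,banach,second_countable_topology}"
  assumes k: "k \<in> {1..d}" and i: "i \<in> I" and g: "good k g"
  shows "integrable (M k) (\<lambda>t. \<kappa> k i t *\<^sub>R g t)"
proof (rule Bochner_Integration.integrable_bound[where f="\<lambda>t. B * (1 + (norm (g t))\<^sup>2)"])
  show "integrable (M k) (\<lambda>t. B * (1 + (norm (g t))\<^sup>2))"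
  proof -
    have "integrable (M k) (\<lambda>t. (norm (g t))\<^sup>2)" using g unfolding good_def by blast
    then have "integrable (M k) (\<lambda>t. 1 + (norm (g t))\<^sup>2)" using int_const[OF k] by (rule_tac Bochner_Integration.integrable_add)
    then show ?thesis by (rule integrable_mult_right)
  qed
  show "(\<lambda>t. \<kappa> k i t *\<^sub>R g t) \<in> borel_measurable (M k)"
  proof -
    have [measurable]: "g \<in> borel_measurable (M k)" "\<kappa> k i \<in> borel_measurable (M k)" using g kmeas[OF k i] unfolding good_def by blast+
    show ?thesis by measurable
  qed
  show "AE t in M k. norm (\<kappa> k i t *\<^sub>R g t) \<le> norm (B * (1 + (norm (g t))\<^sup>2))"
  proof (rule AE_I2)
    fix t assume t: "t \<in> space (M k)"
    have n: "norm (g t) \<le> 1 + (norm (g t))\<^sup>2" by (rule aux_le_sq)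
    have "norm (\<kappa> k i t *\<^sub>R g t) = \<kappa> k i t * norm (g t)" using knn[OF k i t] by simp
    also have "\<dots> \<le> B * (1 + (norm (g t))\<^sup>2)"
      using knn[OF k i t] kbd[OF k i t] n by (meson mult_mono norm_ge_zero order_trans)
    finally show "norm (\<kappa> k i t *\<^sub>R g t) \<le> norm (B * (1 + (norm (g t))\<^sup>2))" by simp
  qed
qed

lemma good_int_kin:
  fixes g g' :: "'x \<Rightarrow> 'h::{real_inner,banach,second_countable_topology}"
  assumes k: "k \<in> {1..d}" and i: "i \<in> I" and g: "good k g" and g': "good k g'"
  shows "integrable (M k) (\<lambda>t. \<kappa> k i t * inner (g t) (g' t))"
proof (rule Bochner_Integration.integrable_bound[where f="\<lambda>t. B * ((norm (g t))\<^sup>2 + (norm (g' t))\<^sup>2)"])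
  show "integrable (M k) (\<lambda>t. B * ((norm (g t))\<^sup>2 + (norm (g' t))\<^sup>2))"
  proof -
    have "integrable (M k) (\<lambda>t. (norm (g t))\<^sup>2)" "integrable (M k) (\<lambda>t. (norm (g' t))\<^sup>2)" using g g' unfolding good_def by blast+
    then have "integrable (M k) (\<lambda>t. (norm (g t))\<^sup>2 + (norm (g' t))\<^sup>2)" by (rule Bochner_Integration.integrable_add)
    then show ?thesis by (rule integrable_mult_right)
  qed
  show "(\<lambda>t. \<kappa> k i t * inner (g t) (g' t)) \<in> borel_measurable (M k)"
  proof -
    have [measurable]: "g \<in> borel_measurable (M k)" "g' \<in> borel_measurable (M k)" "\<kappa> k i \<in> borel_measurable (M k)" using g g' kmeas[OF k i] unfolding good_def by blast+
    show ?thesis by measurable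
  qed
  show "AE t in M k. norm (\<kappa> k i t * inner (g t) (g' t)) \<le> norm (B * ((norm (g t))\<^sup>2 + (norm (g' t))\<^sup>2))"
  proof (rule AE_I2)
    fix t assume t: "t \<in> space (M k)"
    have n: "\<bar>inner (g t) (g' t)\<bar> \<le> (norm (g t))\<^sup>2 + (norm (g' t))\<^sup>2"
    proof -
      have "\<bar>inner (g t) (g' t)\<bar> \<le> norm (g t) * norm (g' t)" by (rule Cauchy_Schwarz_ineq2)
      also have "\<dots> \<le> (norm (g t))\<^sup>2 + (norm (g' t))\<^sup>2"
        by (rule aux_mult_sq)
      finally show ?thesis .
    qed
    have "norm (\<kappa> k i t * inner (g t) (g' t)) = \<kappa> k i t * \<bar>inner (g t) (g' t)\<bar>" using knn[OF k i t] by (simp add: abs_mult)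
    also have "\<dots> \<le> B * ((norm (g t))\<^sup>2 + (norm (g' t))\<^sup>2)"
      using knn[OF k i t] kbd[OF k i t] n by (meson mult_mono abs_ge_zero order_trans)
    finally show "norm (\<kappa> k i t * inner (g t) (g' t)) \<le> norm (B * ((norm (g t))\<^sup>2 + (norm (g' t))\<^sup>2))" by simp
  qed
qed

lemma good_cong:
  assumes "good k g" "\<And>t. t \<in> space (M k) \<Longrightarrow> g' t = g t" shows "good k g'"
proof -
  have "g' \<in> borel_measurable (M k)" using assms unfolding good_def
    by (metis (no_types, lifting) measurable_cong)
  moreover have "integrable (M k) (\<lambda>t. (norm (g' t))\<^sup>2)" using assms unfolding good_def
    by (metis (no_types, lifting) Bochner_Integration.integrable_cong)
  ultimately show ?thesis unfolding good_def by simp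
qed

lemma mn_cong: "(\<And>t. t \<in> space (M k) \<Longrightarrow> g' t = g t) \<Longrightarrow> mn k i g' = mn k i g"
  unfolding mn_def by (rule Bochner_Integration.integral_cong) auto

lemma QI_cong: "(\<And>t. t \<in> space (M k) \<Longrightarrow> g' t = g t) \<Longrightarrow> (\<And>t. t \<in> space (M k) \<Longrightarrow> h' t = h t) \<Longrightarrow> QI k i g' h' = QI k i g h"
  unfolding QI_def by (rule Bochner_Integration.integral_cong) auto

lemma good_diff:
  fixes g g' :: "'x \<Rightarrow> 'h::{real_inner,banach,second_countable_topology}"
  assumes g: "good k g" and g': "good k g'" shows "good k (\<lambda>t. g t - g' t)"
proof -
  have [measurable]: "g \<in> borel_measurable (M k)" "g' \<in> borel_measurable (M k)" using g g' unfolding good_def by blast+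
  have i1: "integrable (M k) (\<lambda>t. 2 * (norm (g t))\<^sup>2 + 2 * (norm (g' t))\<^sup>2)"
  proof -
    have "integrable (M k) (\<lambda>t. (norm (g t))\<^sup>2)" "integrable (M k) (\<lambda>t. (norm (g' t))\<^sup>2)" using g g' unfolding good_def by blast+
    then show ?thesis by (intro Bochner_Integration.integrable_add integrable_mult_right)
  qed
  have m1: "(\<lambda>t. (norm (g t - g' t))\<^sup>2) \<in> borel_measurable (M k)" by measurable
  have a1: "AE t in M k. norm ((norm (g t - g' t))\<^sup>2) \<le> norm (2 * (norm (g t))\<^sup>2 + 2 * (norm (g' t))\<^sup>2)"
  proof (rule AE_I2)
    fix t
    have "norm (g t - g' t) \<le> norm (g t) + norm (g' t)" by (rule norm_triangle_ineq4)
    then have "(norm (g t - g' t))\<^sup>2 \<le> (norm (g t) + norm (g' t))\<^sup>2" by (simp add: power_mono)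
    also have "\<dots> \<le> 2 * (norm (g t))\<^sup>2 + 2 * (norm (g' t))\<^sup>2"
      by (rule aux_sum_sq)
    finally show "norm ((norm (g t - g' t))\<^sup>2) \<le> norm (2 * (norm (g t))\<^sup>2 + 2 * (norm (g' t))\<^sup>2)" by simp
  qed
  have "integrable (M k) (\<lambda>t. (norm (g t - g' t))\<^sup>2)" by (rule Bochner_Integration.integrable_bound[OF i1 m1 a1])
  moreover have "(\<lambda>t. g t - g' t) \<in> borel_measurable (M k)" by measurable
  ultimately show ?thesis unfolding good_def by blast
qed

lemma PP_meas:
  assumes k: "k \<in> {1..d}" shows "PP k (v::nat \<Rightarrow> 'h::{real_inner,banach,second_countable_topology}) \<in> borel_measurable (M k)"
  unfolding PP_def[abs_def] by (rule borel_measurable_sum, rule borel_measurable_scaleR) (auto intro: psi_meas[OF k])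

lemma PP_bound:
  assumes k: "k \<in> {1..d}" and t: "t \<in> space (M k)"
  shows "norm (PP k (v::nat \<Rightarrow> 'h::{real_inner,banach,second_countable_topology}) t) \<le> (\<Sum>i\<in>I. norm (v i))"
proof -
  have "norm (PP k v t) \<le> (\<Sum>i\<in>I. norm (psi k i t *\<^sub>R v i))" unfolding PP_def by (rule norm_sum)
  also have "\<dots> \<le> (\<Sum>i\<in>I. norm (v i))"
  proof (rule sum_mono)
    fix i assume i: "i \<in> I"
    have "norm (psi k i t *\<^sub>R v i) = psi k i t * norm (v i)" using psi_nn[OF k i t] by simp
    also have "\<dots> \<le> norm (v i)" using psi_le1[OF k i t] psi_nn[OF k i t]
      by (simp add: mult_left_le_one_le)
    finally show "norm (psi k i t *\<^sub>R v i) \<le> norm (v i)" .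
  qed
  finally show ?thesis .
qed

lemma good_PP:
  assumes k: "k \<in> {1..d}" shows "good k (PP k (v::nat \<Rightarrow> 'h::{real_inner,banach,second_countable_topology}))"
proof -
  have "integrable (M k) (\<lambda>t. (norm (PP k v t))\<^sup>2)"
  proof (rule Bochner_Integration.integrable_bound[where f="\<lambda>t. (\<Sum>i\<in>I. norm (v i))\<^sup>2"])
    show "integrable (M k) (\<lambda>t. (\<Sum>i\<in>I. norm (v i))\<^sup>2)" by (rule int_const[OF k])
    show "(\<lambda>t. (norm (PP k v t))\<^sup>2) \<in> borel_measurable (M k)" using PP_meas[OF k] by measurable
    show "AE t in M k. norm ((norm (PP k v t))\<^sup>2) \<le> norm ((\<Sum>i\<in>I. norm (v i))\<^sup>2)"
      by (rule AE_I2) (use PP_bound[OF k] in \<open>auto intro!: power_mono\<close>)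
  qed
  then show ?thesis using PP_meas[OF k] unfolding good_def by auto
qed

lemma norm_diff_sq': "(norm (x - y))\<^sup>2 = (norm x)\<^sup>2 - 2 * inner x y + (norm (y::'h::real_inner))\<^sup>2"
  by (simp add: power2_norm_eq_inner inner_diff_left inner_diff_right inner_commute)

lemma good_const: "k \<in> {1..d} \<Longrightarrow> good k (\<lambda>t. c::'h::{real_inner,banach,second_countable_topology})"
  unfolding good_def using int_const by auto

lemma QI_self: "QI k i g g = (\<integral>t. \<kappa> k i t * (norm (g t))\<^sup>2 \<partial>M k)"
  unfolding QI_def by (simp add: power2_norm_eq_inner)

lemma QI_sym: "QI k i g h = QI k i h g"
  unfolding QI_def by (simp add: inner_commute)

lemma QI_nn: assumes "k \<in> {1..d}" "i \<in> I" shows "0 \<le> QI k i g g"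
  unfolding QI_self by (rule integral_nonneg_AE, rule AE_I2) (use knn[OF assms] in simp)

lemma mn_diff:
  assumes k: "k \<in> {1..d}" and i: "i \<in> I" and g: "good k g" and g': "good k g'"
  shows "mn k i (\<lambda>t. g t - g' t) = mn k i g - mn k i g'"
  unfolding mn_def using good_int_kg[OF k i g] good_int_kg[OF k i g']
  by (simp add: scaleR_diff_right)

lemma QI_diff_left:
  assumes k: "k \<in> {1..d}" and i: "i \<in> I" and g: "good k g" and g': "good k g'" and h: "good k h"
  shows "QI k i (\<lambda>t. g t - g' t) h = QI k i g h - QI k i g' h"
  unfolding QI_def using good_int_kin[OF k i g h] good_int_kin[OF k i g' h]
  by (simp add: inner_diff_left right_diff_distrib)

lemma QI_diff_sq:
  assumes k: "k \<in> {1..d}" and i: "i \<in> I" and g: "good k g" and g': "good k g'"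
  shows "QI k i (\<lambda>t. g t - g' t) (\<lambda>t. g t - g' t) = QI k i g g - 2 * QI k i g g' + QI k i g' g'"
proof -
  have gd: "good k (\<lambda>t. g t - g' t)" by (rule good_diff[OF g g'])
  have "QI k i (\<lambda>t. g t - g' t) (\<lambda>t. g t - g' t) = QI k i g (\<lambda>t. g t - g' t) - QI k i g' (\<lambda>t. g t - g' t)"
    by (rule QI_diff_left[OF k i g g' gd])
  also have "QI k i g (\<lambda>t. g t - g' t) = QI k i g g - QI k i g' g"
    by (subst QI_sym, subst QI_diff_left[OF k i g g' g]) (simp add: QI_sym)
  also have "QI k i g' (\<lambda>t. g t - g' t) = QI k i g g' - QI k i g' g'"
    by (subst QI_sym, subst QI_diff_left[OF k i g g' g']) simp
  finally show ?thesis by (simp add: QI_sym[of k i g' g])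
qed

lemma var_eq:
  fixes g :: "'x \<Rightarrow> 'h::{real_inner,banach,second_countable_topology}"
  assumes k: "k \<in> {1..d}" and i: "i \<in> I" and g: "good k g"
  shows "QI k i g g - (norm (mn k i g))\<^sup>2 = (\<integral>t. \<kappa> k i t * (norm (g t - mn k i g))\<^sup>2 \<partial>M k)"
proof -
  let ?m = "mn k i g"
  have c: "good k (\<lambda>t. ?m)" by (rule good_const[OF k])
  have "(\<integral>t. \<kappa> k i t * (norm (g t - ?m))\<^sup>2 \<partial>M k) = QI k i (\<lambda>t. g t - ?m) (\<lambda>t. g t - ?m)"
    by (simp add: QI_self)
  also have "\<dots> = QI k i g g - 2 * QI k i g (\<lambda>t. ?m) + QI k i (\<lambda>t. ?m) (\<lambda>t. ?m)"
    by (rule QI_diff_sq[OF k i g c])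
  also have "QI k i g (\<lambda>t. ?m) = inner ?m ?m"
  proof -
    have "QI k i g (\<lambda>t. ?m) = (\<integral>t. inner (\<kappa> k i t *\<^sub>R g t) ?m \<partial>M k)" unfolding QI_def by simp
    also have "\<dots> = inner ?m ?m" unfolding mn_def using good_int_kg[OF k i g] by (subst integral_inner_left) auto
    finally show ?thesis .
  qed
  also have "QI k i (\<lambda>t. ?m) (\<lambda>t. ?m) = inner ?m ?m"
    unfolding QI_def using kint[OF k i] by simp
  finally show ?thesis by (simp add: power2_norm_eq_inner)
qed

lemma var_nn:
  assumes k: "k \<in> {1..d}" and i: "i \<in> I" and g: "good k g"
  shows "(norm (mn k i g))\<^sup>2 \<le> QI k i g g"
proof -
  have "0 \<le> (\<integral>t. \<kappa> k i t * (norm (g t - mn k i g))\<^sup>2 \<partial>M k)"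
    by (rule integral_nonneg_AE, rule AE_I2) (use knn[OF k i] in simp)
  then show ?thesis using var_eq[OF k i g] by simp
qed

lemma QI_le_nrm:
  assumes k: "k \<in> {1..d}" and i: "i \<in> I"
  shows "a * QI k i g g \<le> nrm k g"
  unfolding nrm_def
  by (rule member_le_sum[where f="\<lambda>i. a * QI k i g g", OF i]) (use finI in \<open>auto intro!: mult_nonneg_nonneg QI_nn[OF k] simp: less_imp_le[OF a_pos]\<close>)

lemma nrm_nn: assumes k: "k \<in> {1..d}" shows "0 \<le> nrm k g"
  unfolding nrm_def by (intro sum_nonneg) (auto intro!: mult_nonneg_nonneg QI_nn[OF k] simp: less_imp_le[OF a_pos])

lemma nrm_diff:
  assumes k: "k \<in> {1..d}" and g: "good k g" and g': "good k g'"
  shows "nrm k (\<lambda>t. g t - g' t) = nrm k g - 2 * (\<Sum>i\<in>I. a * QI k i g g') + nrm k g'"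
proof -
  have "nrm k (\<lambda>t. g t - g' t) = (\<Sum>i\<in>I. a * QI k i g g - 2 * (a * QI k i g g') + a * QI k i g' g')"
    unfolding nrm_def by (rule sum.cong[OF refl]) (simp add: QI_diff_sq[OF k _ g g'] algebra_simps)
  also have "\<dots> = nrm k g - 2 * (\<Sum>i\<in>I. a * QI k i g g') + nrm k g'"
    unfolding nrm_def by (simp add: sum.distrib sum_subtractf sum_distrib_left)
  finally show ?thesis .
qed

lemma L_X:
  fixes h :: "'x \<Rightarrow> 'h::{real_inner,banach,second_countable_topology}"
  assumes j: "j \<in> {1..d}" and h: "good j h"
  shows "(\<Sum>i\<in>I. a * inner (mn j i h) (v i)) = (\<Sum>l\<in>I. a * QI j l h (PP j v))"
proof -
  have P: "good j (PP j v)" by (rule good_PP[OF j])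
  have "(\<Sum>l\<in>I. a * QI j l h (PP j v)) = (\<Sum>l\<in>I. (\<integral>t. a * (\<kappa> j l t * inner (h t) (PP j v t)) \<partial>M j))"
    unfolding QI_def by simp
  also have "\<dots> = (\<integral>t. (\<Sum>l\<in>I. a * (\<kappa> j l t * inner (h t) (PP j v t))) \<partial>M j)"
    by (rule Bochner_Integration.integral_sum[symmetric]) (use good_int_kin[OF j _ h P] in auto)
  also have "\<dots> = (\<integral>t. (\<Sum>i\<in>I. a * (\<kappa> j i t * inner (h t) (v i))) \<partial>M j)"
  proof (rule Bochner_Integration.integral_cong[OF refl])
    fix t assume t: "t \<in> space (M j)"
    have "(\<Sum>l\<in>I. a * (\<kappa> j l t * inner (h t) (PP j v t))) = (\<Sum>l\<in>I. \<Sum>i\<in>I. a * \<kappa> j l t * psi j i t * inner (h t) (v i))"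
      unfolding PP_def by (simp add: inner_sum_right sum_distrib_left mult.assoc)
    also have "\<dots> = (\<Sum>i\<in>I. \<Sum>l\<in>I. a * \<kappa> j l t * psi j i t * inner (h t) (v i))" by (rule sum.swap)
    also have "\<dots> = (\<Sum>i\<in>I. a * \<kappa> j i t * inner (h t) (v i))"
    proof (rule sum.cong[OF refl])
      fix i assume i: "i \<in> I"
      have "(\<Sum>l\<in>I. a * \<kappa> j l t * psi j i t * inner (h t) (v i)) = (\<Sum>l\<in>I. a * \<kappa> j l t * psi j i t) * inner (h t) (v i)"
        by (simp add: sum_distrib_right)
      also have "\<dots> = a * \<kappa> j i t * inner (h t) (v i)" using kappa_psi[OF j i t] by simp
      finally show "(\<Sum>l\<in>I. a * \<kappa> j l t * psi j i t * inner (h t) (v i)) = a * \<kappa> j i t * inner (h t) (v i)" .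
    qed
    finally show "(\<Sum>l\<in>I. a * (\<kappa> j l t * inner (h t) (PP j v t))) = (\<Sum>i\<in>I. a * (\<kappa> j i t * inner (h t) (v i)))"
      by (simp add: mult.assoc)
  qed
  also have "\<dots> = (\<Sum>i\<in>I. (\<integral>t. a * (\<kappa> j i t * inner (h t) (v i)) \<partial>M j))"
    by (rule Bochner_Integration.integral_sum) (use good_int_kin[OF j _ h good_const[OF j]] in auto)
  also have "\<dots> = (\<Sum>i\<in>I. a * inner (mn j i h) (v i))"
  proof (rule sum.cong[OF refl])
    fix i assume i: "i \<in> I"
    have "(\<integral>t. a * (\<kappa> j i t * inner (h t) (v i)) \<partial>M j) = a * (\<integral>t. inner (\<kappa> j i t *\<^sub>R h t) (v i) \<partial>M j)"
      by simp
    also have "\<dots> = a * inner (mn j i h) (v i)" unfolding mn_def using good_int_kg[OF j i h]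
      by (subst integral_inner_left) auto
    finally show "(\<integral>t. a * (\<kappa> j i t * inner (h t) (v i)) \<partial>M j) = a * inner (mn j i h) (v i)" .
  qed
  finally show ?thesis by simp
qed

lemma int_kpsi:
  assumes k: "k \<in> {1..d}" and i: "i \<in> I" and l: "l \<in> I"
  shows "integrable (M k) (\<lambda>t. \<kappa> k i t * psi k l t)"
proof (rule Bochner_Integration.integrable_bound[where f="\<lambda>t. B"])
  show "integrable (M k) (\<lambda>t. B)" by (rule int_const[OF k])
  show "(\<lambda>t. \<kappa> k i t * psi k l t) \<in> borel_measurable (M k)"
    using kmeas[OF k i] psi_meas[OF k l] by measurable
  show "AE t in M k. norm (\<kappa> k i t * psi k l t) \<le> norm B"
  proof (rule AE_I2)
    fix t assume t: "t \<in> space (M k)"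
    have "\<kappa> k i t * psi k l t \<le> B * 1"
      using knn[OF k i t] kbd[OF k i t] psi_nn[OF k l t] psi_le1[OF k l t] by (intro mult_mono) auto
    then show "norm (\<kappa> k i t * psi k l t) \<le> norm B"
      using knn[OF k i t] psi_nn[OF k l t] by simp
  qed
qed

lemma kpsi_sum: "k \<in> {1..d} \<Longrightarrow> l \<in> I \<Longrightarrow> t \<in> space (M k) \<Longrightarrow> (\<Sum>i\<in>I. \<kappa> k i t * psi k l t) = \<kappa> k l t"
  using kappa_psi[of k l t] a_pos by (simp add: sum_distrib_left[symmetric] mult.assoc)

lemma mn_PP:
  assumes k: "k \<in> {1..d}" and i: "i \<in> I"
  shows "mn k i (PP k v) = (\<Sum>l\<in>I. (\<integral>t. \<kappa> k i t * psi k l t \<partial>M k) *\<^sub>R (v l :: 'h::{real_inner,banach,second_countable_topology}))"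
proof -
  have "mn k i (PP k v) = (\<integral>t. (\<Sum>l\<in>I. (\<kappa> k i t * psi k l t) *\<^sub>R v l) \<partial>M k)"
    unfolding mn_def PP_def by (simp add: scaleR_sum_right)
  also have "\<dots> = (\<Sum>l\<in>I. (\<integral>t. (\<kappa> k i t * psi k l t) *\<^sub>R v l \<partial>M k))"
    by (rule Bochner_Integration.integral_sum) (use int_kpsi[OF k i] in auto)
  also have "\<dots> = (\<Sum>l\<in>I. (\<integral>t. \<kappa> k i t * psi k l t \<partial>M k) *\<^sub>R v l)"
    using int_kpsi[OF k i] by (auto intro!: sum.cong integral_scaleR_left)
  finally show ?thesis .
qed

lemma cons_PP:
  assumes k: "k \<in> {1..d}"
  shows "(\<Sum>i\<in>I. mn k i (PP k v)) = (\<Sum>l\<in>I. (v l :: 'h::{real_inner,banach,second_countable_topology}))"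
proof -
  have "(\<Sum>i\<in>I. mn k i (PP k v)) = (\<Sum>i\<in>I. \<Sum>l\<in>I. (\<integral>t. \<kappa> k i t * psi k l t \<partial>M k) *\<^sub>R v l)"
    by (intro sum.cong refl) (rule mn_PP[OF k])
  also have "\<dots> = (\<Sum>l\<in>I. (\<Sum>i\<in>I. (\<integral>t. \<kappa> k i t * psi k l t \<partial>M k)) *\<^sub>R v l)"
    by (subst sum.swap) (simp add: scaleR_sum_left)
  also have "\<dots> = (\<Sum>l\<in>I. v l)"
  proof (rule sum.cong[OF refl])
    fix l assume l: "l \<in> I"
    have "(\<Sum>i\<in>I. (\<integral>t. \<kappa> k i t * psi k l t \<partial>M k)) = (\<integral>t. (\<Sum>i\<in>I. \<kappa> k i t * psi k l t) \<partial>M k)"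
      by (rule Bochner_Integration.integral_sum[symmetric]) (use int_kpsi[OF k _ l] in auto)
    also have "\<dots> = (\<integral>t. \<kappa> k l t \<partial>M k)"
      by (rule Bochner_Integration.integral_cong[OF refl]) (use kpsi_sum[OF k l] in auto)
    also have "\<dots> = 1" by (rule kint[OF k l])
    finally show "(\<Sum>i\<in>I. (\<integral>t. \<kappa> k i t * psi k l t \<partial>M k)) *\<^sub>R v l = v l" by simp
  qed
  finally show ?thesis .
qed

lemma EE_cong:
  assumes "\<And>k t. k \<in> {1..d} \<Longrightarrow> t \<in> space (M k) \<Longrightarrow> G' k t = G k t"
  shows "EE G' = EE G"
proof -
  have "\<And>k i. k \<in> {1..d} \<Longrightarrow> mn k i (G' k) = mn k i (G k)" by (rule mn_cong) (use assms in auto)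
  moreover have "\<And>k i. k \<in> {1..d} \<Longrightarrow> QI k i (G' k) (G' k) = QI k i (G k) (G k)" by (rule QI_cong) (use assms in auto)
  ultimately show ?thesis unfolding EE_def by simp
qed

lemma EE_terms:
  fixes G :: "nat \<Rightarrow> 'x \<Rightarrow> 'h::{real_inner,banach,second_countable_topology}"
  assumes G: "\<And>k. k \<in> {1..d} \<Longrightarrow> good k (G k)"
  shows "0 \<le> EE G"
    and "\<And>k i. k \<in> {1..d} \<Longrightarrow> i \<in> I \<Longrightarrow> a * (QI k i (G k) (G k) - (norm (mn k i (G k)))\<^sup>2) \<le> EE G"
    and "\<And>i. i \<in> I \<Longrightarrow> a * (norm (\<Sum>k\<in>{1..d}. mn k i (G k)))\<^sup>2 \<le> EE G"
proof -
  define T where "T i = a * ((\<Sum>k\<in>{1..d}. QI k i (G k) (G k) - (norm (mn k i (G k)))\<^sup>2) + (norm (\<Sum>k\<in>{1..d}. mn k i (G k)))\<^sup>2)" for i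
  have V: "\<And>k i. k \<in> {1..d} \<Longrightarrow> i \<in> I \<Longrightarrow> 0 \<le> QI k i (G k) (G k) - (norm (mn k i (G k)))\<^sup>2"
    using var_nn G by auto
  have VS: "\<And>i. i \<in> I \<Longrightarrow> 0 \<le> (\<Sum>k\<in>{1..d}. QI k i (G k) (G k) - (norm (mn k i (G k)))\<^sup>2)"
    using V by (intro sum_nonneg) auto
  have Tnn: "\<And>i. i \<in> I \<Longrightarrow> 0 \<le> T i" unfolding T_def using VS a_pos by auto
  have E: "EE G = (\<Sum>i\<in>I. T i)" unfolding EE_def T_def ..
  have Tle: "\<And>i. i \<in> I \<Longrightarrow> T i \<le> EE G" unfolding E by (rule member_le_sum) (use Tnn finI in auto)
  show "0 \<le> EE G" unfolding E by (rule sum_nonneg) (use Tnn in auto)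
  show "a * (QI k i (G k) (G k) - (norm (mn k i (G k)))\<^sup>2) \<le> EE G" if k: "k \<in> {1..d}" and i: "i \<in> I" for k i
  proof -
    have "QI k i (G k) (G k) - (norm (mn k i (G k)))\<^sup>2 \<le> (\<Sum>k\<in>{1..d}. QI k i (G k) (G k) - (norm (mn k i (G k)))\<^sup>2)"
      by (rule member_le_sum[OF k]) (use V i in auto)
    then have "a * (QI k i (G k) (G k) - (norm (mn k i (G k)))\<^sup>2) \<le> a * (\<Sum>k\<in>{1..d}. QI k i (G k) (G k) - (norm (mn k i (G k)))\<^sup>2)"
      using a_pos by (intro mult_left_mono) auto
    moreover have "0 \<le> a * (norm (\<Sum>k\<in>{1..d}. mn k i (G k)))\<^sup>2" using a_pos by simp
    ultimately have "a * (QI k i (G k) (G k) - (norm (mn k i (G k)))\<^sup>2) \<le> T i"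
      unfolding T_def by (simp add: distrib_left)
    then show ?thesis using Tle[OF i] by linarith
  qed
  show "a * (norm (\<Sum>k\<in>{1..d}. mn k i (G k)))\<^sup>2 \<le> EE G" if i: "i \<in> I" for i
  proof -
    have "a * (norm (\<Sum>k\<in>{1..d}. mn k i (G k)))\<^sup>2 \<le> T i"
      unfolding T_def using a_pos VS[OF i] by (simp add: distrib_left)
    then show ?thesis using Tle[OF i] by linarith
  qed
qed

definition RR :: "nat \<Rightarrow> (nat \<Rightarrow> 'x \<Rightarrow> 'h::{real_inner,banach,second_countable_topology}) \<Rightarrow> nat \<Rightarrow> 'h"
  where "RR j G i = (\<Sum>k\<in>{1..d}-{j}. mn k i (G k))"
definition WW :: "nat \<Rightarrow> (nat \<Rightarrow> 'x \<Rightarrow> 'h::{real_inner,banach,second_countable_topology}) \<Rightarrow> real"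
  where "WW j G = (\<Sum>i\<in>I. a * ((\<Sum>k\<in>{1..d}-{j}. QI k i (G k) (G k) - (norm (mn k i (G k)))\<^sup>2) + (norm (RR j G i))\<^sup>2))"

lemma EE_split:
  assumes j: "j \<in> {1..d}"
  shows "EE G = (\<Sum>i\<in>I. a * (QI j i (G j) (G j) + 2 * inner (mn j i (G j)) (RR j G i))) + WW j G"
proof -
  have "EE G = (\<Sum>i\<in>I. a * (QI j i (G j) (G j) + 2 * inner (mn j i (G j)) (RR j G i)) +
     a * ((\<Sum>k\<in>{1..d}-{j}. QI k i (G k) (G k) - (norm (mn k i (G k)))\<^sup>2) + (norm (RR j G i))\<^sup>2))"
    unfolding EE_def
  proof (rule sum.cong[OF refl])
    fix i assume i: "i \<in> I"
    have s1: "(\<Sum>k\<in>{1..d}. QI k i (G k) (G k) - (norm (mn k i (G k)))\<^sup>2) =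
      (QI j i (G j) (G j) - (norm (mn j i (G j)))\<^sup>2) + (\<Sum>k\<in>{1..d}-{j}. QI k i (G k) (G k) - (norm (mn k i (G k)))\<^sup>2)"
      by (rule sum.remove) (use j in auto)
    have s2: "(\<Sum>k\<in>{1..d}. mn k i (G k)) = mn j i (G j) + RR j G i"
      unfolding RR_def by (rule sum.remove) (use j in auto)
    have s3: "(norm (mn j i (G j) + RR j G i))\<^sup>2 = (norm (mn j i (G j)))\<^sup>2 + 2 * inner (mn j i (G j)) (RR j G i) + (norm (RR j G i))\<^sup>2"
      by (simp add: power2_norm_eq_inner inner_add_left inner_add_right inner_commute)
    show "a * ((\<Sum>k\<in>{1..d}. QI k i (G k) (G k) - (norm (mn k i (G k)))\<^sup>2) + (norm (\<Sum>k\<in>{1..d}. mn k i (G k)))\<^sup>2) =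
      a * (QI j i (G j) (G j) + 2 * inner (mn j i (G j)) (RR j G i)) +
      a * ((\<Sum>k\<in>{1..d}-{j}. QI k i (G k) (G k) - (norm (mn k i (G k)))\<^sup>2) + (norm (RR j G i))\<^sup>2)"
      unfolding s1 s2 s3 by (simp add: algebra_simps)
  qed
  also have "\<dots> = (\<Sum>i\<in>I. a * (QI j i (G j) (G j) + 2 * inner (mn j i (G j)) (RR j G i))) + WW j G"
    unfolding WW_def by (rule sum.distrib)
  finally show ?thesis .
qed

lemma RR_upd: "RR j (G(j := g)) = RR j G" unfolding RR_def by (intro ext sum.cong) auto
lemma WW_upd: "WW j (G(j := g)) = WW j G" unfolding WW_def RR_upd by (intro sum.cong refl arg_cong2[where f="(+)"] arg_cong[where f="\<lambda>x. a * x"] refl sum.cong) auto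

lemma L_step:
  fixes G :: "nat \<Rightarrow> 'x \<Rightarrow> 'h::{real_inner,banach,second_countable_topology}"
  assumes j: "j \<in> {1..d}" and G: "\<And>k. k \<in> {1..d} \<Longrightarrow> good k (G k)"
    and g': "\<And>t. t \<in> space (M j) \<Longrightarrow> g' t = PP j (\<lambda>i. - RR j G i) t"
  shows "EE G = EE (G(j := g')) + nrm j (\<lambda>t. G j t - g' t)"
proof -
  let ?g = "G j" and ?R = "RR j G"
  have gg: "good j ?g" using G j by auto
  have gg': "good j g'" by (rule good_cong[OF good_PP[OF j]]) (use g' in auto)
  have X: "(\<Sum>i\<in>I. a * inner (mn j i h) (?R i)) = - (\<Sum>l\<in>I. a * QI j l h g')" if h: "good j h" for h
  proof -
    have "(\<Sum>i\<in>I. a * inner (mn j i h) (- ?R i)) = (\<Sum>l\<in>I. a * QI j l h (PP j (\<lambda>i. - ?R i)))"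
      by (rule L_X[OF j h])
    also have "\<dots> = (\<Sum>l\<in>I. a * QI j l h g')"
      by (intro sum.cong refl arg_cong[where f="\<lambda>x. a * x"] QI_cong) (use g' in auto)
    finally show ?thesis by (simp add: sum_negf)
  qed
  have e1: "EE G = nrm j ?g - 2 * (\<Sum>l\<in>I. a * QI j l ?g g') + WW j G"
  proof -
    have "EE G = (\<Sum>i\<in>I. a * QI j i ?g ?g) + 2 * (\<Sum>i\<in>I. a * inner (mn j i ?g) (?R i)) + WW j G"
      by (subst EE_split[OF j]) (simp add: sum.distrib sum_distrib_left algebra_simps)
    then show ?thesis using X[OF gg] unfolding nrm_def by simp
  qed
  have e2: "EE (G(j := g')) = nrm j g' - 2 * (\<Sum>l\<in>I. a * QI j l g' g') + WW j G"
  proof -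
    have "EE (G(j := g')) = (\<Sum>i\<in>I. a * QI j i g' g') + 2 * (\<Sum>i\<in>I. a * inner (mn j i g') (?R i)) + WW j G"
      by (subst EE_split[OF j]) (simp add: sum.distrib sum_distrib_left algebra_simps RR_upd WW_upd)
    then show ?thesis using X[OF gg'] unfolding nrm_def by simp
  qed
  show ?thesis using e1 e2 nrm_diff[OF j gg gg'] unfolding nrm_def by simp
qed

lemma inner3: "inner x (A + x + C) = inner x (A + C) + (norm (x::'h::real_inner))\<^sup>2"
  unfolding power2_norm_eq_inner by (simp add: inner_add_right)

lemma split_J:
  assumes j: "j \<in> {1..d}"
  shows "(\<Sum>k\<in>{1..d}. f k) = (\<Sum>k\<in>{1..<j}. f k) + f j + (\<Sum>k\<in>{j<..d}. (f k :: 'b::comm_monoid_add))"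
proof -
  have e: "{1..d} = {1..<j} \<union> insert j {j<..d}" using j by auto
  have "(\<Sum>k\<in>{1..d}. f k) = (\<Sum>k\<in>{1..<j}. f k) + (\<Sum>k\<in>insert j {j<..d}. f k)"
    unfolding e by (rule sum.union_disjoint) auto
  also have "(\<Sum>k\<in>insert j {j<..d}. f k) = f j + (\<Sum>k\<in>{j<..d}. f k)" by simp
  finally show ?thesis by (simp add: add.assoc)
qed

lemma split_Jm:
  assumes j: "j \<in> {1..d}"
  shows "(\<Sum>k\<in>{1..d}-{j}. f k) = (\<Sum>k\<in>{1..<j}. f k) + (\<Sum>k\<in>{j<..d}. (f k :: 'b::comm_monoid_add))"
proof -
  have e: "{1..d}-{j} = {1..<j} \<union> {j<..d}" using j by auto
  show ?thesis unfolding e by (rule sum.union_disjoint) auto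
qed

definition sweep :: "(nat \<Rightarrow> 'x \<Rightarrow> 'h::{real_inner,banach,second_countable_topology}) \<Rightarrow> (nat \<Rightarrow> 'x \<Rightarrow> 'h) \<Rightarrow> bool"
  where "sweep G G' \<longleftrightarrow> (\<forall>j\<in>{1..d}. \<forall>t\<in>space (M j). G' j t =
     PP j (\<lambda>i. - ((\<Sum>k\<in>{1..<j}. mn k i (G' k)) + (\<Sum>k\<in>{j<..d}. mn k i (G k)))) t)"

lemma sweep_good:
  assumes "sweep G G'" "j \<in> {1..d}" shows "good j (G' j)"
proof -
  have "\<forall>t\<in>space (M j). G' j t = PP j (\<lambda>i. - ((\<Sum>k\<in>{1..<j}. mn k i (G' k)) + (\<Sum>k\<in>{j<..d}. mn k i (G k)))) t"
    using assms unfolding sweep_def by blast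
  then show ?thesis by (intro good_cong[OF good_PP[OF assms(2)]]) auto
qed

lemma sweep_cons:
  assumes sw: "sweep G G'" and G: "\<And>k. k \<in> {1..d} \<Longrightarrow> cons k (G k)"
  shows "j \<in> {1..d} \<Longrightarrow> cons j (G' j)"
proof (induction j rule: less_induct)
  case (less j)
  let ?v = "\<lambda>i. - ((\<Sum>k\<in>{1..<j}. mn k i (G' k)) + (\<Sum>k\<in>{j<..d}. mn k i (G k)))"
  have "(\<Sum>i\<in>I. mn j i (G' j)) = (\<Sum>i\<in>I. mn j i (PP j ?v))"
    by (intro sum.cong refl mn_cong) (use sw less.prems in \<open>auto simp: sweep_def\<close>)
  also have "\<dots> = (\<Sum>i\<in>I. ?v i)" by (rule cons_PP[OF less.prems])
  also have "\<dots> = - ((\<Sum>i\<in>I. \<Sum>k\<in>{1..<j}. mn k i (G' k)) + (\<Sum>i\<in>I. \<Sum>k\<in>{j<..d}. mn k i (G k)))"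
    by (simp only: sum_negf sum.distrib)
  also have "\<dots> = - ((\<Sum>k\<in>{1..<j}. \<Sum>i\<in>I. mn k i (G' k)) + (\<Sum>k\<in>{j<..d}. \<Sum>i\<in>I. mn k i (G k)))"
    by (simp only: sum.swap[of _ I])
  also have "\<dots> = 0"
  proof -
    have "\<And>k. k \<in> {1..<j} \<Longrightarrow> (\<Sum>i\<in>I. mn k i (G' k)) = 0"
      using less.IH less.prems unfolding cons_def by auto
    moreover have "\<And>k. k \<in> {j<..d} \<Longrightarrow> (\<Sum>i\<in>I. mn k i (G k)) = 0"
      using G less.prems unfolding cons_def by auto
    ultimately show ?thesis by simp
  qed
  finally show ?case unfolding cons_def .
qed

lemma sweep_energy:
  fixes G :: "nat \<Rightarrow> 'x \<Rightarrow> 'h::{real_inner,banach,second_countable_topology}"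
  assumes sw: "sweep G G'" and G: "\<And>k. k \<in> {1..d} \<Longrightarrow> good k (G k)"
  shows "EE G = EE G' + (\<Sum>j\<in>{1..d}. nrm j (\<lambda>t. G j t - G' j t))"
proof -
  define H where "H s = (\<lambda>k. if k \<le> s then G' k else G k)" for s
  have Hgood: "\<And>s k. k \<in> {1..d} \<Longrightarrow> good k (H s k)" unfolding H_def using G sweep_good[OF sw] by auto
  have main: "s \<le> d \<Longrightarrow> EE G = EE (H s) + (\<Sum>j\<in>{1..s}. nrm j (\<lambda>t. G j t - G' j t))" for s
  proof (induction s)
    case 0
    show ?case by (simp, rule EE_cong[symmetric]) (auto simp: H_def)
  next
    case (Suc s)
    let ?j = "Suc s"
    have j: "?j \<in> {1..d}" using Suc.prems by auto
    have Hupd: "H ?j = (H s)(?j := G' ?j)" unfolding H_def by (rule ext) auto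
    have RR: "RR ?j (H s) i = (\<Sum>k\<in>{1..<?j}. mn k i (G' k)) + (\<Sum>k\<in>{?j<..d}. mn k i (G k))" for i
      unfolding RR_def split_Jm[OF j] unfolding H_def by (intro arg_cong2[where f="(+)"] sum.cong refl) auto
    have step: "EE (H s) = EE ((H s)(?j := G' ?j)) + nrm ?j (\<lambda>t. H s ?j t - G' ?j t)"
      by (rule L_step[OF j]) (use Hgood sw j in \<open>auto simp: sweep_def RR\<close>)
    have "H s ?j = G ?j" unfolding H_def by simp
    then have "EE (H s) = EE (H ?j) + nrm ?j (\<lambda>t. G ?j t - G' ?j t)" using step Hupd by simp
    then show ?case using Suc by simp
  qed
  have "EE (H d) = EE G'" by (rule EE_cong) (auto simp: H_def)
  then show ?thesis using main[of d] by simp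
qed

lemma sq_sum_inner: "(norm (\<Sum>k\<in>{1..d}. x k))\<^sup>2 = (\<Sum>j\<in>{1..d}. inner (x j) (\<Sum>k\<in>{1..d}. (x k :: 'h::real_inner)))"
  unfolding power2_norm_eq_inner by (rule inner_sum_left)

lemma sweep_E':
  fixes G :: "nat \<Rightarrow> 'x \<Rightarrow> 'h::{real_inner,banach,second_countable_topology}"
  assumes sw: "sweep G G'"
  shows "EE G' = (\<Sum>i\<in>I. a * (\<Sum>j\<in>{1..d}. inner (mn j i (G' j)) (\<Sum>k\<in>{j<..d}. mn k i (G' k) - mn k i (G k))))"
proof -
  define R where "R j i = (\<Sum>k\<in>{1..<j}. mn k i (G' k)) + (\<Sum>k\<in>{j<..d}. mn k i (G k))" for j i
  have nj: "(\<Sum>i\<in>I. a * QI j i (G' j) (G' j)) = (\<Sum>i\<in>I. a * inner (mn j i (G' j)) (- R j i))" if j: "j \<in> {1..d}" for j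
  proof -
    have gj: "good j (G' j)" by (rule sweep_good[OF sw j])
    have "(\<Sum>i\<in>I. a * inner (mn j i (G' j)) (- R j i)) = (\<Sum>l\<in>I. a * QI j l (G' j) (PP j (\<lambda>i. - R j i)))"
      by (rule L_X[OF j gj])
    also have "\<dots> = (\<Sum>l\<in>I. a * QI j l (G' j) (G' j))"
      by (intro sum.cong refl arg_cong[where f="\<lambda>x. a * x"] QI_cong) (use sw j in \<open>auto simp: sweep_def R_def\<close>)
    finally show ?thesis by simp
  qed
  have "EE G' = (\<Sum>i\<in>I. a * (\<Sum>j\<in>{1..d}. QI j i (G' j) (G' j)) + a * ((norm (\<Sum>k\<in>{1..d}. mn k i (G' k)))\<^sup>2 - (\<Sum>j\<in>{1..d}. (norm (mn j i (G' j)))\<^sup>2)))"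
    unfolding EE_def by (rule sum.cong[OF refl]) (simp add: sum_subtractf algebra_simps)
  also have "\<dots> = (\<Sum>i\<in>I. a * (\<Sum>j\<in>{1..d}. QI j i (G' j) (G' j))) + (\<Sum>i\<in>I. a * ((norm (\<Sum>k\<in>{1..d}. mn k i (G' k)))\<^sup>2 - (\<Sum>j\<in>{1..d}. (norm (mn j i (G' j)))\<^sup>2)))"
    by (rule sum.distrib)
  also have "(\<Sum>i\<in>I. a * (\<Sum>j\<in>{1..d}. QI j i (G' j) (G' j))) = (\<Sum>j\<in>{1..d}. \<Sum>i\<in>I. a * QI j i (G' j) (G' j))"
    by (simp only: sum_distrib_left) (rule sum.swap)
  also have "\<dots> = (\<Sum>j\<in>{1..d}. \<Sum>i\<in>I. a * inner (mn j i (G' j)) (- R j i))"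
    by (rule sum.cong[OF refl]) (rule nj)
  also have "\<dots> = (\<Sum>i\<in>I. a * (\<Sum>j\<in>{1..d}. inner (mn j i (G' j)) (- R j i)))"
    by (simp only: sum_distrib_left) (rule sum.swap)
  finally have e: "EE G' = (\<Sum>i\<in>I. a * ((\<Sum>j\<in>{1..d}. inner (mn j i (G' j)) (- R j i)) + ((norm (\<Sum>k\<in>{1..d}. mn k i (G' k)))\<^sup>2 - (\<Sum>j\<in>{1..d}. (norm (mn j i (G' j)))\<^sup>2))))"
    by (simp only: sum.distrib[symmetric] distrib_left)
  show ?thesis unfolding e
  proof (rule sum.cong[OF refl], rule arg_cong[where f="\<lambda>x. a * x"])
    fix i
    let ?x = "\<lambda>k. mn k i (G' k)" and ?y = "\<lambda>k. mn k i (G k)"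
    have "(norm (\<Sum>k\<in>{1..d}. ?x k))\<^sup>2 - (\<Sum>j\<in>{1..d}. (norm (?x j))\<^sup>2) = (\<Sum>j\<in>{1..d}. inner (?x j) ((\<Sum>k\<in>{1..<j}. ?x k) + (\<Sum>k\<in>{j<..d}. ?x k)))"
    proof -
      have "(norm (\<Sum>k\<in>{1..d}. ?x k))\<^sup>2 = (\<Sum>j\<in>{1..d}. inner (?x j) ((\<Sum>k\<in>{1..<j}. ?x k) + ?x j + (\<Sum>k\<in>{j<..d}. ?x k)))"
        unfolding sq_sum_inner
      proof (rule sum.cong[OF refl])
        fix j assume j: "j \<in> {1..d}"
        show "inner (?x j) (\<Sum>k\<in>{1..d}. ?x k) = inner (?x j) ((\<Sum>k\<in>{1..<j}. ?x k) + ?x j + (\<Sum>k\<in>{j<..d}. ?x k))"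
          by (subst split_J[OF j]) (rule refl)
      qed
      also have "\<dots> = (\<Sum>j\<in>{1..d}. inner (?x j) ((\<Sum>k\<in>{1..<j}. ?x k) + (\<Sum>k\<in>{j<..d}. ?x k)) + (norm (?x j))\<^sup>2)"
        by (rule sum.cong[OF refl]) (rule inner3)
      finally show ?thesis by (simp only: sum.distrib) 
    qed
    note hx = this
    show "(\<Sum>j\<in>{1..d}. inner (?x j) (- R j i)) + ((norm (\<Sum>k\<in>{1..d}. ?x k))\<^sup>2 - (\<Sum>j\<in>{1..d}. (norm (?x j))\<^sup>2)) =
        (\<Sum>j\<in>{1..d}. inner (?x j) (\<Sum>k\<in>{j<..d}. ?x k - ?y k))"
      unfolding hx R_def
      by (subst sum.distrib[symmetric], rule sum.cong[OF refl], simp only: sum_subtractf inner_add_right inner_diff_right inner_minus_right)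
  qed
qed

lemma sum_le_card_bound:
  assumes "finite A" "\<And>x. x \<in> A \<Longrightarrow> f x \<le> (y::real)"
  shows "sum f A \<le> real (card A) * y"
  using sum_bounded_above[of A f y] assms by simp

lemma sweep_contract:
  fixes G G' :: "nat \<Rightarrow> 'x \<Rightarrow> 'h::{real_inner,banach,second_countable_topology}"
  assumes Kc: "\<And>(H::nat \<Rightarrow> 'x \<Rightarrow> 'h) k i. (\<And>k. k \<in> {1..d} \<Longrightarrow> good k (H k)) \<Longrightarrow> (\<And>k. k \<in> {1..d} \<Longrightarrow> cons k (H k)) \<Longrightarrow>
        k \<in> {1..d} \<Longrightarrow> i \<in> I \<Longrightarrow> (norm (mn k i (H k)))\<^sup>2 \<le> Kc * EE H"
    and Kc0: "0 \<le> Kc" and sw: "sweep G G'"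
    and G: "\<And>k. k \<in> {1..d} \<Longrightarrow> good k (G k)" and Gc: "\<And>k. k \<in> {1..d} \<Longrightarrow> cons k (G k)"
  shows "EE G' \<le> ((real (card I) * a * real d * real d * sqrt Kc * sqrt (1/a))\<^sup>2 /
                    (1 + (real (card I) * a * real d * real d * sqrt Kc * sqrt (1/a))\<^sup>2)) * EE G"
proof -
  define C1 where "C1 = real (card I) * a * real d * real d * sqrt Kc * sqrt (1/a)"
  have C1nn: "0 \<le> C1" unfolding C1_def using a_pos Kc0 by simp
  have G'g: "\<And>k. k \<in> {1..d} \<Longrightarrow> good k (G' k)" by (rule sweep_good[OF sw])
  have G'c: "\<And>k. k \<in> {1..d} \<Longrightarrow> cons k (G' k)" by (rule sweep_cons[OF sw Gc])
  define E' where "E' = EE G'"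
  define E where "E = EE G"
  define D where "D = (\<Sum>j\<in>{1..d}. nrm j (\<lambda>t. G j t - G' j t))"
  have ED: "E = E' + D" unfolding E_def E'_def D_def by (rule sweep_energy[OF sw G])
  have E'nn: "0 \<le> E'" unfolding E'_def by (rule EE_terms(1)[OF G'g])
  have Dnn: "0 \<le> D" unfolding D_def by (rule sum_nonneg) (rule nrm_nn)
  have dm: "norm (mn k i (G' k) - mn k i (G k)) \<le> sqrt D * sqrt (1/a)" if k: "k \<in> {1..d}" and i: "i \<in> I" for k i
  proof -
    have gd: "good k (\<lambda>t. G k t - G' k t)" by (rule good_diff[OF G[OF k] G'g[OF k]])
    have "norm (mn k i (G' k) - mn k i (G k)) = norm (mn k i (\<lambda>t. G k t - G' k t))"
      by (simp add: mn_diff[OF k i G[OF k] G'g[OF k]] norm_minus_commute)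
    moreover have "(norm (mn k i (\<lambda>t. G k t - G' k t)))\<^sup>2 \<le> D / a"
    proof -
      have "(norm (mn k i (\<lambda>t. G k t - G' k t)))\<^sup>2 \<le> QI k i (\<lambda>t. G k t - G' k t) (\<lambda>t. G k t - G' k t)"
        by (rule var_nn[OF k i gd])
      also have "\<dots> \<le> nrm k (\<lambda>t. G k t - G' k t) / a"
        using QI_le_nrm[OF k i] a_pos by (simp add: field_simps mult.commute)
      also have "nrm k (\<lambda>t. G k t - G' k t) \<le> D"
        unfolding D_def by (rule member_le_sum[OF k]) (auto intro: nrm_nn)
      finally show ?thesis using a_pos by (simp add: divide_right_mono)
    qed
    ultimately have "(norm (mn k i (G' k) - mn k i (G k)))\<^sup>2 \<le> D * (1/a)" by simp
    then have "norm (mn k i (G' k) - mn k i (G k)) \<le> sqrt (D * (1/a))" by (rule real_le_rsqrt)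
    then show ?thesis by (simp only: real_sqrt_mult)
  qed
  have mb: "norm (mn j i (G' j)) \<le> sqrt Kc * sqrt E'" if j: "j \<in> {1..d}" and i: "i \<in> I" for j i
  proof -
    have "(norm (mn j i (G' j)))\<^sup>2 \<le> Kc * E'" unfolding E'_def by (rule Kc[OF G'g G'c j i])
    then have "norm (mn j i (G' j)) \<le> sqrt (Kc * E')" by (rule real_le_rsqrt)
    then show ?thesis by (simp add: real_sqrt_mult)
  qed
  have tb: "inner (mn j i (G' j)) (\<Sum>k\<in>{j<..d}. mn k i (G' k) - mn k i (G k)) \<le> (sqrt Kc * sqrt E') * (real d * (sqrt D * sqrt (1/a)))"
    if j: "j \<in> {1..d}" and i: "i \<in> I" for j i
  proof -
    have "inner (mn j i (G' j)) (\<Sum>k\<in>{j<..d}. mn k i (G' k) - mn k i (G k)) \<le> norm (mn j i (G' j)) * norm (\<Sum>k\<in>{j<..d}. mn k i (G' k) - mn k i (G k))"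
      by (rule norm_cauchy_schwarz)
    also have "\<dots> \<le> (sqrt Kc * sqrt E') * (real d * (sqrt D * sqrt (1/a)))"
    proof (rule mult_mono[OF mb[OF j i]])
      have "norm (\<Sum>k\<in>{j<..d}. mn k i (G' k) - mn k i (G k)) \<le> (\<Sum>k\<in>{j<..d}. norm (mn k i (G' k) - mn k i (G k)))"
        by (rule norm_sum)
      also have "\<dots> \<le> real (card {j<..d}) * (sqrt D * sqrt (1/a))"
        by (rule sum_le_card_bound) (use dm j i in auto)
      also have "\<dots> \<le> real d * (sqrt D * sqrt (1/a))"
        by (rule mult_right_mono) (use Dnn a_pos in auto)
      finally show "norm (\<Sum>k\<in>{j<..d}. mn k i (G' k) - mn k i (G k)) \<le> real d * (sqrt D * sqrt (1/a))" .
    qed (use Kc0 E'nn in auto)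
    finally show ?thesis .
  qed
  have "E' = (\<Sum>i\<in>I. a * (\<Sum>j\<in>{1..d}. inner (mn j i (G' j)) (\<Sum>k\<in>{j<..d}. mn k i (G' k) - mn k i (G k))))"
    unfolding E'_def by (rule sweep_E'[OF sw])
  also have "\<dots> \<le> real (card I) * (a * (real d * ((sqrt Kc * sqrt E') * (real d * (sqrt D * sqrt (1/a))))))"
  proof (rule sum_le_card_bound[OF finI])
    fix i assume i: "i \<in> I"
    have "(\<Sum>j\<in>{1..d}. inner (mn j i (G' j)) (\<Sum>k\<in>{j<..d}. mn k i (G' k) - mn k i (G k))) \<le> real (card {1..d}) * ((sqrt Kc * sqrt E') * (real d * (sqrt D * sqrt (1/a))))"
      by (rule sum_le_card_bound) (use tb i in auto)
    then show "a * (\<Sum>j\<in>{1..d}. inner (mn j i (G' j)) (\<Sum>k\<in>{j<..d}. mn k i (G' k) - mn k i (G k))) \<le> a * (real d * ((sqrt Kc * sqrt E') * (real d * (sqrt D * sqrt (1/a)))))"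
      using a_pos by (intro mult_left_mono) auto
  qed
  also have "\<dots> = C1 * sqrt E' * sqrt D" unfolding C1_def by (simp add: algebra_simps)
  finally have E'le: "E' \<le> C1 * sqrt E' * sqrt D" .
  have E'D: "E' \<le> C1\<^sup>2 * D"
  proof (cases "E' = 0")
    case True then show ?thesis using Dnn by simp
  next
    case False
    then have pos: "0 < sqrt E'" using E'nn by simp
    have ss: "sqrt E' * sqrt E' = E'" using E'nn by simp
    have h: "sqrt E' * sqrt E' \<le> (C1 * sqrt D) * sqrt E'" unfolding ss using E'le by (simp add: mult.commute mult.left_commute)
    have "sqrt E' \<le> C1 * sqrt D" using h pos by (simp only: mult_le_cancel_right_pos)
    then have "(sqrt E')\<^sup>2 \<le> (C1 * sqrt D)\<^sup>2" using pos by (intro power_mono) auto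
    then show ?thesis using E'nn Dnn by (simp add: power_mult_distrib)
  qed
  have "(1 + C1\<^sup>2) * E' \<le> C1\<^sup>2 * E" using E'D ED by (simp add: algebra_simps)
  then have "E' \<le> C1\<^sup>2 * E / (1 + C1\<^sup>2)" by (simp add: field_simps add_pos_nonneg)
  then show ?thesis unfolding E'_def E_def C1_def by (simp add: field_simps)
qed

definition Pset :: "nat \<Rightarrow> nat \<Rightarrow> 'x set" where "Pset m i = {t \<in> space (M m). 0 < \<kappa> m i t}"
definition Wm :: "nat \<Rightarrow> nat \<Rightarrow> nat \<Rightarrow> real" where "Wm m i1 i2 = (\<integral>t. min (\<kappa> m i1 t) (\<kappa> m i2 t) \<partial>M m)"

lemma Pset_sets: "m \<in> {1..d} \<Longrightarrow> i \<in> I \<Longrightarrow> Pset m i \<in> sets (M m)"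
  unfolding Pset_def using kmeas by measurable

lemma Pset_pos: assumes m: "m \<in> {1..d}" and i: "i \<in> I" shows "0 < emeasure (M m) (Pset m i)"
proof (rule ccontr)
  assume "\<not> 0 < emeasure (M m) (Pset m i)"
  then have "Pset m i \<in> null_sets (M m)" using Pset_sets[OF m i] by (simp add: null_sets_def zero_less_iff_neq_zero)
  then have h: "AE t in M m. t \<notin> Pset m i" using AE_not_in by blast
  have "AE t in M m. \<kappa> m i t = 0"
    using h AE_space by eventually_elim (use knn[OF m i] in \<open>fastforce simp: Pset_def\<close>)
  then have "integral\<^sup>L (M m) (\<kappa> m i) = 0" by (rule integral_eq_zero_AE)
  then show False using kint[OF m i] by simp
qed

lemma cover_pos:
  assumes A: "\<And>m. m \<in> {1..d} \<Longrightarrow> A m \<in> sets (M m) \<and> 0 < emeasure (M m) (A m)"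
  shows "\<exists>i\<in>I. \<forall>m\<in>{1..d}. 0 < emeasure (M m) (A m \<inter> Pset m i)"
proof (rule ccontr)
  assume "\<not> ?thesis"
  then have "\<forall>i\<in>I. \<exists>m\<in>{1..d}. \<not> 0 < emeasure (M m) (A m \<inter> Pset m i)" by blast
  then obtain mf where mf: "\<And>i. i \<in> I \<Longrightarrow> mf i \<in> {1..d} \<and> emeasure (M (mf i)) (A (mf i) \<inter> Pset (mf i) i) = 0"
    by (metis not_gr_zero)
  define A' where "A' m = A m - (\<Union>i\<in>{i\<in>I. mf i = m}. A m \<inter> Pset m i)" for m
  have ne: "A' m \<noteq> {}" if m: "m \<in> {1..d}" for m
  proof -
    have nul: "(\<Union>i\<in>{i\<in>I. mf i = m}. A m \<inter> Pset m i) \<in> null_sets (M m)"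
    proof (rule null_sets_UN')
      show "countable {i\<in>I. mf i = m}" using finI by (simp add: countable_finite)
      fix i assume i: "i \<in> {i\<in>I. mf i = m}"
      then have "A m \<inter> Pset m i \<in> sets (M m)" using A[OF m] Pset_sets[OF m] by auto
      then show "A m \<inter> Pset m i \<in> null_sets (M m)" using mf i by (auto simp: null_sets_def)
    qed
    have "emeasure (M m) (A' m) = emeasure (M m) (A m)" unfolding A'_def
      by (rule emeasure_Diff_null_set[OF nul]) (use A[OF m] in auto)
    then show ?thesis using A[OF m] by auto
  qed
  define x where "x m = (SOME t. t \<in> A' m)" for m
  have xA: "x m \<in> A' m" if "m \<in> {1..d}" for m unfolding x_def using ne[OF that] by (simp add: some_in_eq)
  have xs: "x m \<in> space (M m)" if m: "m \<in> {1..d}" for m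
    using xA[OF m] A[OF m] sets.sets_into_space unfolding A'_def by blast
  obtain i where i: "i \<in> I" "\<forall>m\<in>{1..d}. \<eta> \<le> \<kappa> m i (x m)" using cover[OF xs] by blast
  let ?m = "mf i"
  have m: "?m \<in> {1..d}" using mf[OF i(1)] by blast
  have "x ?m \<in> Pset ?m i" using i(2) m xs[OF m] eta_pos unfolding Pset_def by fastforce
  moreover have "x ?m \<in> A ?m" using xA[OF m] unfolding A'_def by blast
  moreover have "x ?m \<notin> A ?m \<inter> Pset ?m i" using xA[OF m] i(1) unfolding A'_def by blast
  ultimately show False by blast
qed

lemma min_int: assumes m: "m \<in> {1..d}" and i1: "i1 \<in> I" and i2: "i2 \<in> I"
  shows "integrable (M m) (\<lambda>t. min (\<kappa> m i1 t) (\<kappa> m i2 t))"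
proof (rule Bochner_Integration.integrable_bound[where f="\<lambda>t. B"])
  show "integrable (M m) (\<lambda>t. B)" by (rule int_const[OF m])
  show "(\<lambda>t. min (\<kappa> m i1 t) (\<kappa> m i2 t)) \<in> borel_measurable (M m)" using kmeas[OF m i1] kmeas[OF m i2] by measurable
  show "AE t in M m. norm (min (\<kappa> m i1 t) (\<kappa> m i2 t)) \<le> norm B"
  proof (rule AE_I2)
    fix t assume t: "t \<in> space (M m)"
    have "min (\<kappa> m i1 t) (\<kappa> m i2 t) \<le> B" using kbd[OF m i1 t] by linarith
    then show "norm (min (\<kappa> m i1 t) (\<kappa> m i2 t)) \<le> norm B" using knn[OF m i1 t] knn[OF m i2 t] by simp
  qed
qed

lemma W_pos:
  assumes m: "m \<in> {1..d}" and i1: "i1 \<in> I" and i2: "i2 \<in> I"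
    and pos: "0 < emeasure (M m) (Pset m i1 \<inter> Pset m i2)"
  shows "0 < Wm m i1 i2"
proof -
  have nn: "AE t in M m. 0 \<le> min (\<kappa> m i1 t) (\<kappa> m i2 t)" by (rule AE_I2) (use knn[OF m i1] knn[OF m i2] in auto)
  have ge: "0 \<le> Wm m i1 i2" unfolding Wm_def by (rule integral_nonneg_AE[OF nn])
  have "Wm m i1 i2 \<noteq> 0"
  proof
    assume "Wm m i1 i2 = 0"
    then have "AE t in M m. min (\<kappa> m i1 t) (\<kappa> m i2 t) = 0"
      unfolding Wm_def using integral_nonneg_eq_0_iff_AE[OF min_int[OF m i1 i2] nn] by simp
    then have "AE t in M m. t \<notin> Pset m i1 \<inter> Pset m i2"
      by eventually_elim (auto simp: Pset_def)
    then have "Pset m i1 \<inter> Pset m i2 \<in> null_sets (M m)"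
      using AE_iff_null_sets Pset_sets[OF m i1] Pset_sets[OF m i2] by blast
    then show False using pos by auto
  qed
  then show ?thesis using ge by simp
qed

lemma pair_bound:
  fixes g :: "'x \<Rightarrow> 'h::{real_inner,banach,second_countable_topology}"
  assumes m: "m \<in> {1..d}" and i1: "i1 \<in> I" and i2: "i2 \<in> I" and g: "good m g"
  shows "Wm m i1 i2 * (norm (mn m i1 g - mn m i2 g))\<^sup>2 \<le>
     2 * (QI m i1 g g - (norm (mn m i1 g))\<^sup>2) + 2 * (QI m i2 g g - (norm (mn m i2 g))\<^sup>2)"
proof -
  let ?c1 = "mn m i1 g" and ?c2 = "mn m i2 g"
  have g1: "good m (\<lambda>t. g t - ?c1)" by (rule good_diff[OF g good_const[OF m]])
  have g2: "good m (\<lambda>t. g t - ?c2)" by (rule good_diff[OF g good_const[OF m]])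
  have int1: "integrable (M m) (\<lambda>t. \<kappa> m i1 t * (norm (g t - ?c1))\<^sup>2)"
    using good_int_kin[OF m i1 g1 g1] by (simp add: power2_norm_eq_inner)
  have int2: "integrable (M m) (\<lambda>t. \<kappa> m i2 t * (norm (g t - ?c2))\<^sup>2)"
    using good_int_kin[OF m i2 g2 g2] by (simp add: power2_norm_eq_inner)
  have "Wm m i1 i2 * (norm (?c1 - ?c2))\<^sup>2 = (\<integral>t. min (\<kappa> m i1 t) (\<kappa> m i2 t) * (norm (?c1 - ?c2))\<^sup>2 \<partial>M m)"
    unfolding Wm_def by simp
  also have "\<dots> \<le> (\<integral>t. 2 * (\<kappa> m i1 t * (norm (g t - ?c1))\<^sup>2) + 2 * (\<kappa> m i2 t * (norm (g t - ?c2))\<^sup>2) \<partial>M m)"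
  proof (rule integral_mono)
    show "integrable (M m) (\<lambda>t. min (\<kappa> m i1 t) (\<kappa> m i2 t) * (norm (?c1 - ?c2))\<^sup>2)"
      using min_int[OF m i1 i2] by simp
    show "integrable (M m) (\<lambda>t. 2 * (\<kappa> m i1 t * (norm (g t - ?c1))\<^sup>2) + 2 * (\<kappa> m i2 t * (norm (g t - ?c2))\<^sup>2))"
      using int1 int2 by simp
    fix t assume t: "t \<in> space (M m)"
    have e: "?c1 - ?c2 = (g t - ?c2) - (g t - ?c1)" by simp
    have "norm (?c1 - ?c2) \<le> norm (g t - ?c1) + norm (g t - ?c2)"
      unfolding e using norm_triangle_ineq4[of "g t - ?c2" "g t - ?c1"] by linarith
    then have "(norm (?c1 - ?c2))\<^sup>2 \<le> (norm (g t - ?c1) + norm (g t - ?c2))\<^sup>2" by (simp add: power_mono)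
    also have "\<dots> \<le> 2 * (norm (g t - ?c1))\<^sup>2 + 2 * (norm (g t - ?c2))\<^sup>2" by (rule aux_sum_sq)
    finally have sq: "(norm (?c1 - ?c2))\<^sup>2 \<le> 2 * (norm (g t - ?c1))\<^sup>2 + 2 * (norm (g t - ?c2))\<^sup>2" .
    have mn0: "0 \<le> min (\<kappa> m i1 t) (\<kappa> m i2 t)" using knn[OF m i1 t] knn[OF m i2 t] by simp
    have "min (\<kappa> m i1 t) (\<kappa> m i2 t) * (norm (?c1 - ?c2))\<^sup>2 \<le> min (\<kappa> m i1 t) (\<kappa> m i2 t) * (2 * (norm (g t - ?c1))\<^sup>2 + 2 * (norm (g t - ?c2))\<^sup>2)"
      by (rule mult_left_mono[OF sq mn0])
    also have "\<dots> = 2 * (min (\<kappa> m i1 t) (\<kappa> m i2 t) * (norm (g t - ?c1))\<^sup>2) + 2 * (min (\<kappa> m i1 t) (\<kappa> m i2 t) * (norm (g t - ?c2))\<^sup>2)"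
      by (simp add: algebra_simps)
    also have "\<dots> \<le> 2 * (\<kappa> m i1 t * (norm (g t - ?c1))\<^sup>2) + 2 * (\<kappa> m i2 t * (norm (g t - ?c2))\<^sup>2)"
      by (intro add_mono mult_left_mono mult_right_mono) auto
    finally show "min (\<kappa> m i1 t) (\<kappa> m i2 t) * (norm (?c1 - ?c2))\<^sup>2 \<le> 2 * (\<kappa> m i1 t * (norm (g t - ?c1))\<^sup>2) + 2 * (\<kappa> m i2 t * (norm (g t - ?c2))\<^sup>2)" .
  qed
  also have "\<dots> = 2 * (\<integral>t. \<kappa> m i1 t * (norm (g t - ?c1))\<^sup>2 \<partial>M m) + 2 * (\<integral>t. \<kappa> m i2 t * (norm (g t - ?c2))\<^sup>2 \<partial>M m)"
    using int1 int2 by simp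
  also have "\<dots> = 2 * (QI m i1 g g - (norm ?c1)\<^sup>2) + 2 * (QI m i2 g g - (norm ?c2)\<^sup>2)"
    using var_eq[OF m i1 g] var_eq[OF m i2 g] by simp
  finally show ?thesis .
qed

lemma triple:
  assumes k: "k \<in> {1..d}" and i: "i \<in> I" and i': "i' \<in> I"
  shows "\<exists>i''\<in>I. 0 < Wm k i i'' \<and> (\<forall>m\<in>{1..d}. m \<noteq> k \<longrightarrow> 0 < Wm m i' i'')"
proof -
  define A where "A m = (if m = k then Pset k i else Pset m i')" for m
  have "\<And>m. m \<in> {1..d} \<Longrightarrow> A m \<in> sets (M m) \<and> 0 < emeasure (M m) (A m)"
    unfolding A_def using Pset_sets Pset_pos i i' by auto
  from cover_pos[OF this] obtain i'' where i'': "i'' \<in> I" "\<forall>m\<in>{1..d}. 0 < emeasure (M m) (A m \<inter> Pset m i'')" by blast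
  have "0 < emeasure (M k) (A k \<inter> Pset k i'')" using i''(2) k by blast
  then have "0 < Wm k i i''" by (intro W_pos[OF k i i''(1)]) (simp add: A_def)
  moreover have "\<forall>m\<in>{1..d}. m \<noteq> k \<longrightarrow> 0 < Wm m i' i''"
    using i''(2) by (auto intro!: W_pos[OF _ i' i''(1)] simp: A_def)
  ultimately show ?thesis using i''(1) by blast
qed

lemma coer:
  "\<exists>K0. 0 \<le> K0 \<and> (\<forall>G::nat \<Rightarrow> 'x \<Rightarrow> 'h::{real_inner,banach,second_countable_topology}.
      (\<forall>k\<in>{1..d}. good k (G k) \<and> cons k (G k)) \<longrightarrow> (\<forall>k\<in>{1..d}. \<forall>i\<in>I. norm (mn k i (G k)) \<le> K0 * sqrt (EE G)))"
proof -
  define WS where "WS = (\<lambda>(m, i1, i2). Wm m i1 i2) ` ({1..d} \<times> I \<times> I)"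
  have finWS: "finite WS" unfolding WS_def using finI by simp
  define w0 where "w0 = Min (insert 1 {w \<in> WS. 0 < w})"
  have w0pos: "0 < w0" unfolding w0_def using finWS by (subst Min_gr_iff) auto
  have w0le: "w0 \<le> Wm m i1 i2" if "m \<in> {1..d}" "i1 \<in> I" "i2 \<in> I" "0 < Wm m i1 i2" for m i1 i2
  proof -
    have "Wm m i1 i2 \<in> WS" unfolding WS_def using that by (intro image_eqI[of _ _ "(m,i1,i2)"]) auto
    then show ?thesis unfolding w0_def using finWS that by (intro Min_le) auto
  qed
  define K0 where "K0 = (1 + real d) * sqrt (4 / (a * w0)) + 2 * sqrt (1 / a)"
  have K0nn: "0 \<le> K0" unfolding K0_def using a_pos w0pos by simp
  show ?thesis
  proof (intro exI[of _ K0] conjI K0nn allI impI ballI)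
    fix G :: "nat \<Rightarrow> 'x \<Rightarrow> 'h" and k i
    assume G: "\<forall>k\<in>{1..d}. good k (G k) \<and> cons k (G k)" and k: "k \<in> {1..d}" and i: "i \<in> I"
    have Gg: "\<And>k. k \<in> {1..d} \<Longrightarrow> good k (G k)" using G by blast
    define E where "E = EE G"
    have Enn: "0 \<le> E" unfolding E_def by (rule EE_terms(1)[OF Gg])
    let ?c = "\<lambda>m j. mn m j (G m)"
    let ?s = "\<lambda>j. \<Sum>m\<in>{1..d}. ?c m j"
    define \<delta> where "\<delta> = sqrt (4 / (a * w0)) * sqrt E"
    define \<sigma> where "\<sigma> = sqrt (1 / a) * sqrt E"
    have V: "QI m j (G m) (G m) - (norm (?c m j))\<^sup>2 \<le> E / a" if "m \<in> {1..d}" "j \<in> I" for m j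
      using EE_terms(2)[OF Gg that] a_pos unfolding E_def by (simp add: field_simps)
    have pairb: "norm (?c m j1 - ?c m j2) \<le> \<delta>" if m: "m \<in> {1..d}" and j1: "j1 \<in> I" and j2: "j2 \<in> I" and W: "0 < Wm m j1 j2" for m j1 j2
    proof -
      have "w0 * (norm (?c m j1 - ?c m j2))\<^sup>2 \<le> Wm m j1 j2 * (norm (?c m j1 - ?c m j2))\<^sup>2"
        by (rule mult_right_mono[OF w0le[OF m j1 j2 W]]) simp
      also have "\<dots> \<le> 2 * (QI m j1 (G m) (G m) - (norm (?c m j1))\<^sup>2) + 2 * (QI m j2 (G m) (G m) - (norm (?c m j2))\<^sup>2)"
        by (rule pair_bound[OF m j1 j2 Gg[OF m]])
      also have "\<dots> \<le> 2 * (E / a) + 2 * (E / a)" using V[OF m j1] V[OF m j2] by simp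
      finally have "(norm (?c m j1 - ?c m j2))\<^sup>2 \<le> (4 / (a * w0)) * E"
        using w0pos a_pos by (simp add: field_simps)
      then have "norm (?c m j1 - ?c m j2) \<le> sqrt ((4 / (a * w0)) * E)" by (rule real_le_rsqrt)
      then show ?thesis unfolding \<delta>_def by (simp only: real_sqrt_mult)
    qed
    have sb: "norm (?s j) \<le> \<sigma>" if j: "j \<in> I" for j
    proof -
      have "a * (norm (?s j))\<^sup>2 \<le> E" using EE_terms(3)[OF Gg j] unfolding E_def .
      then have "(norm (?s j))\<^sup>2 \<le> (1 / a) * E" using a_pos by (simp add: field_simps)
      then have "norm (?s j) \<le> sqrt ((1 / a) * E)" by (rule real_le_rsqrt)
      then show ?thesis unfolding \<sigma>_def by (simp only: real_sqrt_mult)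
    qed
    have dnn: "0 \<le> \<delta>" unfolding \<delta>_def using a_pos w0pos Enn by simp
    have tri: "norm (?c k i - ?c k i') \<le> (1 + real d) * \<delta> + 2 * \<sigma>" if i': "i' \<in> I" for i'
    proof -
      obtain i'' where i'': "i'' \<in> I" "0 < Wm k i i''" "\<forall>m\<in>{1..d}. m \<noteq> k \<longrightarrow> 0 < Wm m i' i''"
        using triple[OF k i i'] by blast
      have sr: "\<And>j. ?s j = ?c k j + (\<Sum>m\<in>{1..d}-{k}. ?c m j)" by (rule sum.remove) (use k in auto)
      have eq: "?c k i - ?c k i' = (?c k i - ?c k i'') + (?s i'' - ?s i') + (\<Sum>m\<in>{1..d}-{k}. ?c m i' - ?c m i'')"
        unfolding sr[of i''] sr[of i'] by (simp add: sum_subtractf algebra_simps)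
      have "norm (?c k i - ?c k i') \<le> norm (?c k i - ?c k i'') + norm (?s i'' - ?s i') + norm (\<Sum>m\<in>{1..d}-{k}. ?c m i' - ?c m i'')"
        unfolding eq by (meson norm_triangle_ineq order_trans add_mono order_refl)
      also have "\<dots> \<le> \<delta> + 2 * \<sigma> + real d * \<delta>"
      proof (intro add_mono)
        show "norm (?c k i - ?c k i'') \<le> \<delta>" by (rule pairb[OF k i i''(1) i''(2)])
        have "norm (?s i'' - ?s i') \<le> norm (?s i'') + norm (?s i')" by (rule norm_triangle_ineq4)
        then show "norm (?s i'' - ?s i') \<le> 2 * \<sigma>" using sb[OF i''(1)] sb[OF i'] by linarith
        have "norm (\<Sum>m\<in>{1..d}-{k}. ?c m i' - ?c m i'') \<le> (\<Sum>m\<in>{1..d}-{k}. norm (?c m i' - ?c m i''))" by (rule norm_sum)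
        also have "\<dots> \<le> real (card ({1..d}-{k})) * \<delta>"
          by (rule sum_le_card_bound) (use pairb i' i'' in auto)
        also have "\<dots> \<le> real d * \<delta>" by (rule mult_right_mono[OF _ dnn]) (use card_Diff1_le[of "{1..d}" k] in simp)
        finally show "norm (\<Sum>m\<in>{1..d}-{k}. ?c m i' - ?c m i'') \<le> real d * \<delta>" .
      qed
      finally show ?thesis by (simp add: algebra_simps)
    qed
    have cons0: "(\<Sum>i'\<in>I. ?c k i') = 0" using G k unfolding cons_def by blast
    have "real (card I) *\<^sub>R ?c k i = (\<Sum>i'\<in>I. ?c k i - ?c k i')"
      using cons0 by (simp add: sum_subtractf scaleR_conv_of_real sum_constant_scaleR)
    then have "real (card I) * norm (?c k i) \<le> (\<Sum>i'\<in>I. norm (?c k i - ?c k i'))"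
      by (metis norm_scaleR abs_of_nat norm_sum)
    also have "\<dots> \<le> real (card I) * ((1 + real d) * \<delta> + 2 * \<sigma>)"
      by (rule sum_le_card_bound[OF finI]) (rule tri)
    finally have "norm (?c k i) \<le> (1 + real d) * \<delta> + 2 * \<sigma>"
      using finI Ine by (simp add: card_gt_0_iff)
    then show "norm (mn k i (G k)) \<le> K0 * sqrt (EE G)"
      unfolding K0_def \<delta>_def \<sigma>_def E_def by (simp add: algebra_simps)
  qed
qed

theorem core_main:
  fixes G :: "nat \<Rightarrow> nat \<Rightarrow> 'x \<Rightarrow> 'h::{real_inner,banach,second_countable_topology}"
  assumes G0: "\<And>k. k \<in> {1..d} \<Longrightarrow> good k (G 0 k) \<and> cons k (G 0 k)"
    and rec: "\<And>r. sweep (G r) (G (Suc r))"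
  shows "\<exists>C \<rho>. 0 < C \<and> 0 < \<rho> \<and> \<rho> < 1 \<and> (\<forall>r. \<forall>j\<in>{1..d}. nrm j (G r j) \<le> C * \<rho> ^ r) \<and>
     (\<forall>r. \<forall>j\<in>{1..d}. \<forall>t\<in>space (M j). norm (G (Suc r) j t) \<le> C * \<rho> ^ r)"
proof -
  obtain K0 where K0: "0 \<le> K0" and K0b: "\<And>H::nat \<Rightarrow> 'x \<Rightarrow> 'h. (\<forall>k\<in>{1..d}. good k (H k) \<and> cons k (H k)) \<Longrightarrow>
      (\<forall>k\<in>{1..d}. \<forall>i\<in>I. norm (mn k i (H k)) \<le> K0 * sqrt (EE H))"
    using coer by blast
  have GC: "\<forall>k\<in>{1..d}. good k (G r k) \<and> cons k (G r k)" for r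
  proof (induction r)
    case 0 then show ?case using G0 by blast
  next
    case (Suc r) then show ?case using sweep_good[OF rec] sweep_cons[OF rec] by blast
  qed
  have Kc: "(norm (mn k i (H k)))\<^sup>2 \<le> K0\<^sup>2 * EE H"
    if "\<And>k. k \<in> {1..d} \<Longrightarrow> good k (H k)" "\<And>k. k \<in> {1..d} \<Longrightarrow> cons k (H k)" "k \<in> {1..d}" "i \<in> I"
    for H :: "nat \<Rightarrow> 'x \<Rightarrow> 'h" and k i
  proof -
    have "norm (mn k i (H k)) \<le> K0 * sqrt (EE H)" using K0b[of H] that by blast
    moreover have "0 \<le> EE H" by (rule EE_terms(1)) (use that in auto)
    ultimately have "(norm (mn k i (H k)))\<^sup>2 \<le> (K0 * sqrt (EE H))\<^sup>2" by (intro power_mono) auto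
    then show ?thesis using \<open>0 \<le> EE H\<close> by (simp add: power_mult_distrib)
  qed
  define C1 where "C1 = real (card I) * a * real d * real d * sqrt (K0\<^sup>2) * sqrt (1/a)"
  define q where "q = C1\<^sup>2 / (1 + C1\<^sup>2)"
  have q01: "0 \<le> q" "q < 1" unfolding q_def by (auto simp: field_simps add_pos_nonneg)
  have contr: "EE (G (Suc r)) \<le> q * EE (G r)" for r
    unfolding q_def C1_def
    by (rule sweep_contract[OF Kc _ rec]) (use GC in auto)
  define E0 where "E0 = EE (G 0)"
  have Enn: "0 \<le> EE (G r)" for r by (rule EE_terms(1)) (use GC in auto)
  define \<rho>0 where "\<rho>0 = max q (1/2)"
  have r0: "0 < \<rho>0" "\<rho>0 < 1" "q \<le> \<rho>0" unfolding \<rho>0_def using q01 by auto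
  have Edec: "EE (G r) \<le> E0 * \<rho>0 ^ r" for r
  proof (induction r)
    case 0 then show ?case by (simp add: E0_def)
  next
    case (Suc r)
    have "EE (G (Suc r)) \<le> q * EE (G r)" by (rule contr)
    also have "\<dots> \<le> \<rho>0 * EE (G r)" by (rule mult_right_mono[OF r0(3) Enn])
    also have "\<dots> \<le> \<rho>0 * (E0 * \<rho>0 ^ r)" by (rule mult_left_mono[OF Suc]) (use r0 in auto)
    finally show ?case by (simp add: algebra_simps)
  qed
  have E0nn: "0 \<le> E0" unfolding E0_def by (rule Enn)
  define \<rho> where "\<rho> = sqrt \<rho>0"
  have rr1: "0 < \<rho>" "\<rho> < 1" unfolding \<rho>_def using r0 by auto
  have "\<rho> * \<rho> = \<rho>0" unfolding \<rho>_def using r0 by simp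
  moreover have "\<rho> * \<rho> \<le> \<rho> * 1" using rr1 by (intro mult_left_mono) auto
  ultimately have rr: "0 < \<rho>" "\<rho> < 1" "\<rho>0 \<le> \<rho>" using rr1 by auto
  have rpow: "\<rho>0 ^ r \<le> \<rho> ^ r" for r using rr r0 by (intro power_mono) auto
  have sqE: "sqrt (EE (G r)) \<le> sqrt E0 * \<rho> ^ r" for r
  proof -
    have "sqrt (EE (G r)) \<le> sqrt (E0 * \<rho>0 ^ r)" using Edec[of r] by simp
    also have "\<dots> = sqrt E0 * \<rho> ^ r" unfolding \<rho>_def by (simp add: real_sqrt_mult real_sqrt_power)
    finally show ?thesis .
  qed
  define C2 where "C2 = real (card I) * (1 + a * K0\<^sup>2)"
  define C3 where "C3 = 2 * real (card I) * real d * K0"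
  define C where "C = C2 * E0 + C3 * sqrt E0 + 1"
  have C2nn: "0 \<le> C2" unfolding C2_def using a_pos by simp
  have C3nn: "0 \<le> C3" unfolding C3_def using K0 by simp
  have "0 \<le> C2 * E0" "0 \<le> C3 * sqrt E0" using C2nn C3nn E0nn by simp_all
  then have Cpos: "0 < C" and CA: "C2 * E0 \<le> C" and CB: "C3 * sqrt E0 \<le> C" unfolding C_def by linarith+
  have nrmb: "nrm j (G r j) \<le> C * \<rho> ^ r" if j: "j \<in> {1..d}" for r j
  proof -
    have g: "good j (G r j)" using GC j by blast
    have "nrm j (G r j) = (\<Sum>i\<in>I. a * (QI j i (G r j) (G r j) - (norm (mn j i (G r j)))\<^sup>2) + a * (norm (mn j i (G r j)))\<^sup>2)"
      unfolding nrm_def by (simp add: algebra_simps)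
    also have "\<dots> \<le> (\<Sum>i\<in>I. EE (G r) + a * (K0\<^sup>2 * EE (G r)))"
    proof (rule sum_mono, rule add_mono)
      fix i assume i: "i \<in> I"
      show "a * (QI j i (G r j) (G r j) - (norm (mn j i (G r j)))\<^sup>2) \<le> EE (G r)"
        by (rule EE_terms(2)) (use GC j i in auto)
      show "a * (norm (mn j i (G r j)))\<^sup>2 \<le> a * (K0\<^sup>2 * EE (G r))"
        by (rule mult_left_mono[OF Kc]) (use GC j i a_pos in auto)
    qed
    also have "\<dots> = C2 * EE (G r)" unfolding C2_def by (simp add: algebra_simps)
    also have "\<dots> \<le> C2 * (E0 * \<rho>0 ^ r)" by (rule mult_left_mono[OF Edec C2nn])
    also have "\<dots> \<le> C2 * (E0 * \<rho> ^ r)" using C2nn E0nn rpow by (intro mult_left_mono) auto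
    also have "\<dots> = (C2 * E0) * \<rho> ^ r" by simp
    also have "\<dots> \<le> C * \<rho> ^ r" using CA rr by (intro mult_right_mono) auto
    finally show ?thesis .
  qed
  have supb: "norm (G (Suc r) j t) \<le> C * \<rho> ^ r" if j: "j \<in> {1..d}" and t: "t \<in> space (M j)" for r j t
  proof -
    define v where "v i = - ((\<Sum>k\<in>{1..<j}. mn k i (G (Suc r) k)) + (\<Sum>k\<in>{j<..d}. mn k i (G r k)))" for i
    have "G (Suc r) j t = PP j v t" using rec[of r] j t unfolding sweep_def v_def by blast
    then have "norm (G (Suc r) j t) \<le> (\<Sum>i\<in>I. norm (v i))" using PP_bound[OF j t] by simp
    also have "\<dots> \<le> real (card I) * (2 * real d * (K0 * (sqrt E0 * \<rho> ^ r)))"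
    proof (rule sum_le_card_bound[OF finI])
      fix i assume i: "i \<in> I"
      have b1: "norm (mn k i (G (Suc r) k)) \<le> K0 * (sqrt E0 * \<rho> ^ r)" if k: "k \<in> {1..d}" for k
      proof -
        have "norm (mn k i (G (Suc r) k)) \<le> K0 * sqrt (EE (G (Suc r)))" using K0b[OF GC] k i by blast
        also have "sqrt (EE (G (Suc r))) \<le> sqrt (EE (G r))" using contr[of r] q01 Enn[of r] Enn[of "Suc r"]
          by (intro real_sqrt_le_mono) (smt (verit) mult_left_le_one_le)
        then have "K0 * sqrt (EE (G (Suc r))) \<le> K0 * (sqrt E0 * \<rho> ^ r)"
          using sqE[of r] K0 by (meson mult_left_mono order_trans)
        finally show ?thesis .
      qed
      have b2: "norm (mn k i (G r k)) \<le> K0 * (sqrt E0 * \<rho> ^ r)" if k: "k \<in> {1..d}" for k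
      proof -
        have "norm (mn k i (G r k)) \<le> K0 * sqrt (EE (G r))" using K0b[OF GC] k i by blast
        also have "\<dots> \<le> K0 * (sqrt E0 * \<rho> ^ r)" using sqE[of r] K0 by (rule mult_left_mono)
        finally show ?thesis .
      qed
      have "norm (v i) \<le> norm (\<Sum>k\<in>{1..<j}. mn k i (G (Suc r) k)) + norm (\<Sum>k\<in>{j<..d}. mn k i (G r k))"
        unfolding v_def norm_minus_cancel by (rule norm_triangle_ineq)
      also have "\<dots> \<le> real d * (K0 * (sqrt E0 * \<rho> ^ r)) + real d * (K0 * (sqrt E0 * \<rho> ^ r))"
      proof (rule add_mono)
        have "norm (\<Sum>k\<in>{1..<j}. mn k i (G (Suc r) k)) \<le> (\<Sum>k\<in>{1..<j}. norm (mn k i (G (Suc r) k)))" by (rule norm_sum)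
        also have "\<dots> \<le> real (card {1..<j}) * (K0 * (sqrt E0 * \<rho> ^ r))" by (rule sum_le_card_bound) (use b1 j in auto)
        also have "\<dots> \<le> real d * (K0 * (sqrt E0 * \<rho> ^ r))" using j K0 E0nn rr by (intro mult_right_mono) auto
        finally show "norm (\<Sum>k\<in>{1..<j}. mn k i (G (Suc r) k)) \<le> real d * (K0 * (sqrt E0 * \<rho> ^ r))" .
        have "norm (\<Sum>k\<in>{j<..d}. mn k i (G r k)) \<le> (\<Sum>k\<in>{j<..d}. norm (mn k i (G r k)))" by (rule norm_sum)
        also have "\<dots> \<le> real (card {j<..d}) * (K0 * (sqrt E0 * \<rho> ^ r))" by (rule sum_le_card_bound) (use b2 j in auto)
        also have "\<dots> \<le> real d * (K0 * (sqrt E0 * \<rho> ^ r))" using j K0 E0nn rr by (intro mult_right_mono) auto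
        finally show "norm (\<Sum>k\<in>{j<..d}. mn k i (G r k)) \<le> real d * (K0 * (sqrt E0 * \<rho> ^ r))" .
      qed
      finally show "norm (v i) \<le> 2 * real d * (K0 * (sqrt E0 * \<rho> ^ r))" by (simp add: algebra_simps)
    qed
    also have "\<dots> = C3 * sqrt E0 * \<rho> ^ r" unfolding C3_def by (simp add: algebra_simps)
    also have "\<dots> \<le> C * \<rho> ^ r" using CB rr by (intro mult_right_mono) auto
    finally show ?thesis .
  qed
  show ?thesis using Cpos rr nrmb supb by blast
qed

lemma good_add:
  fixes g g' :: "'x \<Rightarrow> 'h::{real_inner,banach,second_countable_topology}"
  assumes g: "good k g" and g': "good k g'" shows "good k (\<lambda>t. g t + g' t)"
proof -
  have m: "good k (\<lambda>t. - g' t)"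
  proof -
    have [measurable]: "g' \<in> borel_measurable (M k)" using g' unfolding good_def by blast
    have "(\<lambda>t. - g' t) \<in> borel_measurable (M k)" by measurable
    then show ?thesis using g' unfolding good_def by simp
  qed
  show ?thesis using good_diff[OF g m] by simp
qed

lemma PP_diff: "PP j v t - PP j w t = PP j (\<lambda>i. v i - w i) t"
  unfolding PP_def by (simp add: sum_subtractf scaleR_diff_right)

lemma PP_minus: "- PP j v t = PP j (\<lambda>i. - v i) t"
  unfolding PP_def by (simp add: sum_negf)

lemma PP_add: "PP j v t + PP j w t = PP j (\<lambda>i. v i + w i) t"
  unfolding PP_def by (simp add: sum.distrib scaleR_add_right)

lemma PP_sum: "finite A \<Longrightarrow> (\<Sum>k\<in>A. PP j (w k) t) = PP j (\<lambda>i. \<Sum>k\<in>A. w k i) t"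
  unfolding PP_def by (simp add: scaleR_sum_right sum.swap[of _ A])

lemma nrm_lower:
  fixes g :: "'x \<Rightarrow> 'h::{real_inner,banach,second_countable_topology}"
  assumes j: "j \<in> {1..d}" and g: "good j g"
  shows "a * \<eta> * (\<integral>t. (norm (g t))\<^sup>2 \<partial>M j) \<le> nrm j g"
proof -
  have ig: "integrable (M j) (\<lambda>t. (norm (g t))\<^sup>2)" using g unfolding good_def by blast
  have ik: "\<And>i. i \<in> I \<Longrightarrow> integrable (M j) (\<lambda>t. a * (\<kappa> j i t * (norm (g t))\<^sup>2))"
    using good_int_kin[OF j _ g g] by (simp add: power2_norm_eq_inner)
  have "nrm j g = (\<Sum>i\<in>I. (\<integral>t. a * (\<kappa> j i t * (norm (g t))\<^sup>2) \<partial>M j))"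
    unfolding nrm_def QI_self by simp
  also have "\<dots> = (\<integral>t. (\<Sum>i\<in>I. a * (\<kappa> j i t * (norm (g t))\<^sup>2)) \<partial>M j)"
    by (rule Bochner_Integration.integral_sum[symmetric]) (use ik in auto)
  also have "\<dots> = (\<integral>t. p1 j t * (norm (g t))\<^sup>2 \<partial>M j)"
    unfolding p1_def by (simp add: sum_distrib_left sum_distrib_right mult.assoc)
  finally have e: "nrm j g = (\<integral>t. p1 j t * (norm (g t))\<^sup>2 \<partial>M j)" .
  have "a * \<eta> * (\<integral>t. (norm (g t))\<^sup>2 \<partial>M j) = (\<integral>t. a * \<eta> * (norm (g t))\<^sup>2 \<partial>M j)" by simp
  also have "\<dots> \<le> (\<integral>t. p1 j t * (norm (g t))\<^sup>2 \<partial>M j)"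
  proof (rule integral_mono)
    show "integrable (M j) (\<lambda>t. a * \<eta> * (norm (g t))\<^sup>2)" using ig by simp
    have "integrable (M j) (\<lambda>t. \<Sum>i\<in>I. a * (\<kappa> j i t * (norm (g t))\<^sup>2))" using ik by auto
    then show "integrable (M j) (\<lambda>t. p1 j t * (norm (g t))\<^sup>2)"
      unfolding p1_def by (simp add: sum_distrib_left sum_distrib_right mult.assoc)
    fix t assume t: "t \<in> space (M j)"
    show "a * \<eta> * (norm (g t))\<^sup>2 \<le> p1 j t * (norm (g t))\<^sup>2"
      by (rule mult_right_mono[OF p1_lower[OF j t]]) simp
  qed
  finally show ?thesis unfolding e .
qed

lemma PP_cong: "(\<And>i. i \<in> I \<Longrightarrow> v i = w i) \<Longrightarrow> PP j v t = PP j w t"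
  unfolding PP_def by (rule sum.cong) auto

end


lemma lebL_space: "space (lebL L j) = PiE {..<L j} (\<lambda>_. UNIV)"
  unfolding lebL_def by (simp add: space_PiM)

lemma id_borel_lebL: "(\<lambda>x. x) \<in> borel_measurable (lebL L j)"
proof (rule measurable_coordinatewise_then_product)
  fix i
  show "(\<lambda>x. x i) \<in> borel_measurable (lebL L j)"
  proof (cases "i < L j")
    case True
    have "(\<lambda>x. x i) \<in> measurable (lebL L j) lborel" unfolding lebL_def by (rule measurable_component_singleton) (use True in auto)
    then show ?thesis by simp
  next
    case False
    have "(\<lambda>x. undefined) \<in> borel_measurable (lebL L j)" by simp
    moreover have "\<And>x. x \<in> space (lebL L j) \<Longrightarrow> x i = undefined" using False unfolding lebL_space by (auto simp: PiE_def extensional_def)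
    ultimately show ?thesis by (metis (no_types, lifting) measurable_cong)
  qed
qed

lemma D_sets:
  assumes "compact (D::(nat \<Rightarrow> real) set)" "D \<subseteq> PiE {..<L j} (\<lambda>_. UNIV)"
  shows "D \<in> sets (lebL L j)"
proof -
  have "D \<in> sets borel" using assms(1) by (simp add: compact_imp_closed)
  then have "(\<lambda>x. x) -` D \<inter> space (lebL L j) \<in> sets (lebL L j)" by (rule measurable_sets[OF id_borel_lebL])
  then show ?thesis using assms(2) unfolding lebL_space by (simp add: Int_absorb2)
qed

lemma D_fin:
  assumes "compact (D::(nat \<Rightarrow> real) set)" "D \<subseteq> PiE {..<L j} (\<lambda>_. UNIV)"
  shows "emeasure (lebL L j) D < \<infinity>"
proof -
  have "compact (\<Union>l\<in>{..<L j}. (\<lambda>x. x l) ` D)"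
    by (intro compact_UN finite_lessThan compact_continuous_image continuous_on_subset[OF continuous_on_product_coordinates] assms(1)) auto
  then obtain R where R: "\<And>y. y \<in> (\<Union>l\<in>{..<L j}. (\<lambda>x. x l) ` D) \<Longrightarrow> norm y \<le> R"
    using compact_imp_bounded bounded_iff by metis
  have sub: "D \<subseteq> PiE {..<L j} (\<lambda>_. {-R..R})"
  proof
    fix x assume x: "x \<in> D"
    have "x l \<in> {-R..R}" if l: "l < L j" for l
    proof -
      have "\<bar>x l\<bar> \<le> R" using R x l by fastforce
      then show ?thesis by (simp add: abs_le_iff)
    qed
    then show "x \<in> PiE {..<L j} (\<lambda>_. {-R..R})" using x assms(2) by (auto simp: PiE_iff)
  qed
  interpret product_sigma_finite "\<lambda>_::nat. lborel" by standard
  have "emeasure (lebL L j) D \<le> emeasure (lebL L j) (PiE {..<L j} (\<lambda>_. {-R..R}))"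
    by (rule emeasure_mono[OF sub]) (unfold lebL_def, auto intro!: sets_PiM_I_finite)
  also have "\<dots> = (\<Prod>l\<in>{..<L j}. emeasure lborel {-R..R})" unfolding lebL_def by (rule emeasure_PiM) auto
  also have "\<dots> < \<infinity>" by (simp add: power_less_top_ennreal emeasure_lborel_Icc_eq)
  finally show ?thesis .
qed

lemma distL_meas[measurable]: "(\<lambda>t. distL L j t u) \<in> borel_measurable (lebL L j)"
proof -
  have [measurable]: "\<And>i. i < L j \<Longrightarrow> (\<lambda>t. t i) \<in> borel_measurable (lebL L j)"
  proof -
    fix i assume i: "i < L j"
    have "(\<lambda>x. x i) \<in> measurable (lebL L j) lborel" unfolding lebL_def by (rule measurable_component_singleton) (use i in auto)
    then show "(\<lambda>t. t i) \<in> borel_measurable (lebL L j)" by simp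
  qed
  have [measurable]: "(\<lambda>t. \<Sum>i<L j. (t i - u i)\<^sup>2) \<in> borel_measurable (lebL L j)"
  proof (rule borel_measurable_sum)
    fix i assume "i \<in> {..<L j}"
    then have [measurable]: "(\<lambda>t. t i) \<in> borel_measurable (lebL L j)" by simp
    show "(\<lambda>t. (t i - u i)\<^sup>2) \<in> borel_measurable (lebL L j)" by measurable
  qed
  show ?thesis unfolding distL_def by measurable
qed

lemma K_meas:
  fixes K :: "nat \<Rightarrow> real \<Rightarrow> real" and h :: "nat \<Rightarrow> real" and D :: "nat \<Rightarrow> (nat \<Rightarrow> real) set" and L :: "nat \<Rightarrow> nat"
  assumes "continuous_on {0..} (K j)"
  shows "(\<lambda>s. K j (max 0 s)) \<in> borel_measurable borel"
proof -
  have "continuous_on UNIV (\<lambda>s::real. K j (max 0 s))"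
    by (rule continuous_on_compose2[OF assms]) (auto intro!: continuous_intros)
  then show ?thesis by (rule borel_measurable_continuous_onI)
qed

lemma distL_nn: "0 \<le> distL L j t u" unfolding distL_def by (simp add: sum_nonneg)

lemma Kh_meas:
  fixes K :: "nat \<Rightarrow> real \<Rightarrow> real" and h :: "nat \<Rightarrow> real" and D :: "nat \<Rightarrow> (nat \<Rightarrow> real) set" and L :: "nat \<Rightarrow> nat"
  assumes h: "h j > 0" and K: "continuous_on {0..} (K j)"
  shows "(\<lambda>t. sbf_Kh L D h K j t u) \<in> borel_measurable (lebL L j)"
proof -
  have e: "K j (distL L j t u / h j) = K j (max 0 (distL L j t u / h j))" for t
    using distL_nn[of L j t u] h by (simp add: max_def)
  have [measurable]: "(\<lambda>s. K j (max 0 s)) \<in> borel_measurable borel" by (rule K_meas[of K j, OF K])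
  have g: "(\<lambda>t. K j (distL L j t u / h j) / h j ^ L j) \<in> borel_measurable (lebL L j)"
    unfolding e by measurable
  show ?thesis unfolding sbf_Kh_def Let_def
    by (cases "(LINT t:D j|lebL L j. K j (distL L j t u / h j) / h j ^ L j) = 0") (use g in simp_all)
qed

lemma den_nn:
  fixes K :: "nat \<Rightarrow> real \<Rightarrow> real" and h :: "nat \<Rightarrow> real" and D :: "nat \<Rightarrow> (nat \<Rightarrow> real) set" and L :: "nat \<Rightarrow> nat"
  assumes h: "h j > 0" and Knn: "\<forall>s\<ge>0. 0 \<le> K j s"
  shows "0 \<le> (LINT t:D j|lebL L j. K j (distL L j t u / h j) / h j ^ L j)"
  unfolding set_lebesgue_integral_def
  by (rule Bochner_Integration.integral_nonneg) (use h Knn distL_nn in \<open>auto simp: indicator_def\<close>)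

lemma Kh_nn:
  fixes K :: "nat \<Rightarrow> real \<Rightarrow> real" and h :: "nat \<Rightarrow> real" and D :: "nat \<Rightarrow> (nat \<Rightarrow> real) set" and L :: "nat \<Rightarrow> nat"
  assumes h: "h j > 0" and Knn: "\<forall>s\<ge>0. 0 \<le> K j s"
  shows "0 \<le> sbf_Kh L D h K j t u"
proof -
  define den where "den = (LINT t:D j|lebL L j. K j (distL L j t u / h j) / h j ^ L j)"
  have dnn: "0 \<le> den" unfolding den_def by (rule den_nn[where h=h and K=K and j=j, OF h Knn])
  have g: "0 \<le> K j (distL L j t u / h j) / h j ^ L j"
    using Knn distL_nn[of L j t u] h by simp
  have e: "sbf_Kh L D h K j t u = (if den = 0 then 1 / measure (lebL L j) (D j) else K j (distL L j t u / h j) / h j ^ L j / den)"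
    unfolding sbf_Kh_def Let_def den_def ..
  have "0 \<le> K j (distL L j t u / h j) / h j ^ L j / den" using g dnn by (rule divide_nonneg_nonneg)
  then show ?thesis unfolding e by simp
qed

lemma K_bounded:
  fixes K :: "nat \<Rightarrow> real \<Rightarrow> real" and h :: "nat \<Rightarrow> real" and D :: "nat \<Rightarrow> (nat \<Rightarrow> real) set" and L :: "nat \<Rightarrow> nat"
  assumes K: "continuous_on {0..} (K j)" and Kz: "\<forall>s\<ge>1. K j s = 0"
  shows "\<exists>Km. \<forall>s\<ge>0. K j s \<le> Km"
proof -
  have "compact (K j ` {0..1})" by (rule compact_continuous_image[OF continuous_on_subset[OF K]]) auto
  then obtain Km where Km: "\<And>y. y \<in> K j ` {0..1} \<Longrightarrow> norm y \<le> Km" using compact_imp_bounded bounded_iff by metis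
  have "\<forall>s\<ge>0. K j s \<le> max Km 0"
  proof (intro allI impI)
    fix s :: real assume s: "0 \<le> s"
    show "K j s \<le> max Km 0"
    proof (cases "s \<le> 1")
      case True then have "norm (K j s) \<le> Km" using Km s by auto
      then show ?thesis by simp
    next
      case False then show ?thesis using Kz by simp
    qed
  qed
  then show ?thesis by blast
qed

lemma Kh_bd:
  fixes K :: "nat \<Rightarrow> real \<Rightarrow> real" and h :: "nat \<Rightarrow> real" and D :: "nat \<Rightarrow> (nat \<Rightarrow> real) set" and L :: "nat \<Rightarrow> nat"
  assumes h: "h j > 0" and K: "continuous_on {0..} (K j)" and Knn: "\<forall>s\<ge>0. 0 \<le> K j s" and Kz: "\<forall>s\<ge>1. K j s = 0"
  shows "\<exists>B. \<forall>t. sbf_Kh L D h K j t u \<le> B"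
proof -
  obtain Km where Km: "\<And>s. 0 \<le> s \<Longrightarrow> K j s \<le> Km" using K_bounded[of K j, OF K Kz] by blast
  define den where "den = (LINT t:D j|lebL L j. K j (distL L j t u / h j) / h j ^ L j)"
  have dnn: "0 \<le> den" unfolding den_def by (rule den_nn[where h=h and K=K and j=j, OF h Knn])
  show ?thesis
  proof (cases "den = 0")
    case True then show ?thesis unfolding sbf_Kh_def Let_def den_def[symmetric] by auto
  next
    case False
    then have dpos: "0 < den" using dnn by simp
    have "sbf_Kh L D h K j t u \<le> Km / h j ^ L j / den" for t
    proof -
      have "K j (distL L j t u / h j) \<le> Km" using Km distL_nn h by simp
      then have "K j (distL L j t u / h j) / h j ^ L j \<le> Km / h j ^ L j" using h by (simp add: divide_right_mono)
      then have "K j (distL L j t u / h j) / h j ^ L j / den \<le> Km / h j ^ L j / den"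
        by (rule divide_right_mono) (use dpos \<open>K j (distL L j t u / h j) / h j ^ L j \<le> Km / h j ^ L j\<close> in auto)
      moreover have "sbf_Kh L D h K j t u = K j (distL L j t u / h j) / h j ^ L j / den"
        unfolding sbf_Kh_def Let_def den_def[symmetric] using False by simp
      ultimately show ?thesis by simp
    qed
    then show ?thesis by blast
  qed
qed

lemma Kh_int:
  fixes K :: "nat \<Rightarrow> real \<Rightarrow> real" and h :: "nat \<Rightarrow> real" and D :: "nat \<Rightarrow> (nat \<Rightarrow> real) set" and L :: "nat \<Rightarrow> nat"
  assumes h: "h j > 0" and Knn: "\<forall>s\<ge>0. 0 \<le> K j s"
    and Ds: "D j \<in> sets (lebL L j)" and Dp: "0 < emeasure (lebL L j) (D j)" and Df: "emeasure (lebL L j) (D j) < \<infinity>"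
  shows "integral\<^sup>L (restrict_space (lebL L j) (D j)) (\<lambda>t. sbf_Kh L D h K j t u) = 1"
proof -
  define g where "g t = K j (distL L j t u / h j) / h j ^ L j" for t
  define den where "den = (LINT t:D j|lebL L j. g t)"
  have DS: "D j \<inter> space (lebL L j) \<in> sets (lebL L j)" using Ds by simp
  have R: "integral\<^sup>L (restrict_space (lebL L j) (D j)) f = (LINT t:D j|lebL L j. f t)" for f :: "_ \<Rightarrow> real"
    unfolding set_lebesgue_integral_def by (rule integral_restrict_space[OF DS])
  have Kh: "sbf_Kh L D h K j t u = (if den = 0 then 1 / measure (lebL L j) (D j) else g t / den)" for t
    unfolding sbf_Kh_def Let_def g_def den_def ..
  show ?thesis
  proof (cases "den = 0")
    case True
    have "emeasure (lebL L j) (D j) \<noteq> 0" "emeasure (lebL L j) (D j) \<noteq> top" using Dp Df by auto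
    then have "measure (lebL L j) (D j) \<noteq> 0" by (simp add: measure_def enn2real_eq_0_iff)
    have "(LINT t:D j|lebL L j. 1 / measure (lebL L j) (D j)) = measure (lebL L j) (D j) *\<^sub>R (1 / measure (lebL L j) (D j))"
      by (rule set_integral_const[OF Ds]) (use Df in auto)
    then show ?thesis unfolding R Kh using True \<open>measure (lebL L j) (D j) \<noteq> 0\<close> by simp
  next
    case False
    have "(LINT t:D j|lebL L j. g t / den) = den / den"
      unfolding set_lebesgue_integral_def den_def by simp
    then show ?thesis unfolding R Kh using False by simp
  qed
qed

lemma finite_ub:
  assumes "finite S" "\<And>s. s \<in> S \<Longrightarrow> \<exists>b. \<forall>t. f s t \<le> (b::real)"
  shows "\<exists>b. \<forall>s\<in>S. \<forall>t. f s t \<le> b"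
  using assms
proof (induction S rule: finite_induct)
  case empty then show ?case by simp
next
  case (insert x S)
  obtain b1 where b1: "\<forall>t. f x t \<le> b1" using insert.prems by blast
  obtain b2 where b2: "\<forall>s\<in>S. \<forall>t. f s t \<le> b2" using insert.IH insert.prems by blast
  have "\<forall>s\<in>insert x S. \<forall>t. f s t \<le> max b1 b2" using b1 b2 by (auto intro: le_max_iff_disj[THEN iffD2])
  then show ?case by blast
qed

lemma sum_ofbool: "(\<Sum>i<(n::nat). F i * of_bool (P i)) = (\<Sum>i\<in>{i. i < n \<and> P i}. (F i :: real))"
proof -
  have "(\<Sum>i<n. F i * of_bool (P i)) = (\<Sum>i\<in>{..<n}. if P i then F i else 0)" by (intro sum.cong) auto
  also have "\<dots> = (\<Sum>i\<in>{i\<in>{..<n}. P i}. F i)" by (rule sum.inter_filter[symmetric]) (rule finite_lessThan)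
  also have "{i\<in>{..<n}. P i} = {i. i < n \<and> P i}" by auto
  finally show ?thesis .
qed


theorem lemmaS18:
  fixes L :: "nat \<Rightarrow> nat" and D :: "nat \<Rightarrow> (nat \<Rightarrow> real) set" and d n :: nat
    and \<xi> :: "nat \<Rightarrow> nat \<Rightarrow> nat \<Rightarrow> real" and Y :: "nat \<Rightarrow> 'h::{real_inner,banach,second_countable_topology}"
    and h :: "nat \<Rightarrow> real" and K :: "nat \<Rightarrow> real \<Rightarrow> real"
    and f :: "nat \<Rightarrow> (nat \<Rightarrow> real) \<Rightarrow> 'h"
    and F :: "nat \<Rightarrow> nat \<Rightarrow> (nat \<Rightarrow> real) \<Rightarrow> 'h"
  assumes D_sub: "\<forall>j\<in>{1..d}. D j \<subseteq> {..<L j} \<rightarrow>\<^sub>E UNIV"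
    and D_compact: "\<forall>j\<in>{1..d}. compact (D j)"
    and h_pos: "\<forall>j\<in>{1..d}. h j > 0"
    and K_cont: "\<forall>j\<in>{1..d}. continuous_on {0..} (K j)"
    and K_nonneg: "\<forall>j\<in>{1..d}. \<forall>t\<ge>0. K j t \<ge> 0"
    and K_pos: "\<forall>j\<in>{1..d}. \<forall>t. 0 \<le> t \<and> t < 1 \<longrightarrow> K j t > 0"
    and K_zero: "\<forall>j\<in>{1..d}. \<forall>t\<ge>1. K j t = 0"
    and xi_sub: "\<forall>i<n. \<forall>j\<in>{1..d}. \<xi> i j \<in> {..<L j} \<rightarrow>\<^sub>E UNIV"
    and p0_pos: "sbf_p0 d n D \<xi> > 0"
    and p_bounded: "\<exists>c C. 0 < c \<and> (\<forall>x. (\<forall>j\<in>{1..d}. x j \<in> D j) \<longrightarrow>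
                        c \<le> sbf_p L D h K d n \<xi> x \<and> sbf_p L D h K d n \<xi> x \<le> C)"
    and f_constr: "\<forall>j\<in>{1..d}. sbf_constraint L D h K d n \<xi> j (f j)"
    and f_sol: "\<forall>j\<in>{1..d}. \<forall>x\<in>D j.
        f j x = sbf_m L D h K d n \<xi> Y j x - sbf_f0 d n D \<xi> Y
                - (\<Sum>k\<in>{1..d} - {j}. sbf_proj L D h K d n \<xi> j k (f k) x)"
    and F0_constr: "\<forall>j\<in>{1..d}. sbf_constraint L D h K d n \<xi> j (F 0 j)"
    and F_iter: "\<forall>r\<ge>1. \<forall>j\<in>{1..d}. \<forall>x\<in>D j.
        F r j x = sbf_m L D h K d n \<xi> Y j x - sbf_f0 d n D \<xi> Y
                - (\<Sum>k\<in>{1..<j}. sbf_proj L D h K d n \<xi> j k (F r k) x)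
                - (\<Sum>k\<in>{j<..d}. sbf_proj L D h K d n \<xi> j k (F (r - 1) k) x)"
  shows "(\<exists>c2 \<rho>2. c2 > 0 \<and> 0 < \<rho>2 \<and> \<rho>2 < 1 \<and>
            (\<forall>j\<in>{1..d}. \<forall>r.
               (\<integral>\<^sup>+ x \<in> D j. ennreal ((norm (F r j x - f j x))\<^sup>2) \<partial>lebL L j) \<le> ennreal (c2 * \<rho>2 ^ r)))
       \<and> (\<forall>j\<in>{1..d}. AE x in lebL L j. x \<in> D j \<longrightarrow>
               (\<lambda>r. norm (F r j x - f j x)) \<longlonglongrightarrow> 0)
       \<and> (\<forall>j\<in>{1..d}. \<forall>\<epsilon>>0. \<exists>S. S \<in> sets (lebL L j) \<and> S \<subseteq> D j \<and>
               emeasure (lebL L j) (D j - S) < ennreal \<epsilon> \<and>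
               uniform_limit S (\<lambda>r. F r j) (f j) sequentially)"
  proof -
  define I where "I = {i. i < n \<and> sbf_inD d D \<xi> i}"
  define a where "a = inverse (sbf_p0 d n D \<xi> * real n)"
  define M where "M k = restrict_space (lebL L k) (D k)" for k
  define \<kappa> where "\<kappa> k i t = sbf_Kh L D h K k t (\<xi> i k)" for k i t
  have finI: "finite I" unfolding I_def by simp
  have nz: "n \<noteq> 0"
  proof
    assume "n = 0" then have "sbf_p0 d n D \<xi> = 0" unfolding sbf_p0_def by simp
    with p0_pos show False by simp
  qed
  have p0n: "sbf_p0 d n D \<xi> * real n = real (card I)"
  proof -
    have "(\<Sum>i<n. (of_bool (sbf_inD d D \<xi> i) :: real)) = real (card I)"
      using sum_ofbool[of "\<lambda>_. 1" "sbf_inD d D \<xi>" n] unfolding I_def by simp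
    then show ?thesis unfolding sbf_p0_def using nz by simp
  qed
  have "0 < sbf_p0 d n D \<xi> * real n" using p0_pos nz by simp
  then have Ine: "I \<noteq> {}" unfolding p0n by (metis card.empty of_nat_0 order_less_irrefl)
  have a_pos: "0 < a" unfolding a_def p0n using Ine finI by (simp add: card_gt_0_iff)
  obtain i0 where i0: "i0 \<in> I" using Ine by blast
  have x0D: "\<forall>j\<in>{1..d}. \<xi> i0 j \<in> D j" using i0 unfolding I_def sbf_inD_def by blast
  have Ds: "\<And>j. j \<in> {1..d} \<Longrightarrow> D j \<in> sets (lebL L j)" using D_sets D_compact D_sub by blast
  have Df: "\<And>j. j \<in> {1..d} \<Longrightarrow> emeasure (lebL L j) (D j) < \<infinity>" using D_fin D_compact D_sub by blast
  have sum_I: "\<And>F. (\<Sum>i<n. F i * of_bool (sbf_inD d D \<xi> i)) = (\<Sum>i\<in>I. (F i :: real))"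
    unfolding I_def by (rule sum_ofbool)
  have p_eq: "sbf_p L D h K d n \<xi> x = a * (\<Sum>i\<in>I. \<Prod>j\<in>{1..d}. \<kappa> j i (x j))" for x
    unfolding sbf_p_def sum_I a_def \<kappa>_def ..
  have p1_eq: "sbf_p1 L D h K d n \<xi> j t = a * (\<Sum>i\<in>I. \<kappa> j i t)" for j t
    unfolding sbf_p1_def sum_I a_def \<kappa>_def ..
  have p2_eq: "sbf_p2 L D h K d n \<xi> j k x t = a * (\<Sum>i\<in>I. \<kappa> j i x * \<kappa> k i t)" for j k x t
    unfolding sbf_p2_def sum_I a_def \<kappa>_def ..
  have Knn: "\<And>j. j \<in> {1..d} \<Longrightarrow> \<forall>s\<ge>0. 0 \<le> K j s" using K_nonneg by blast
  have Dp: "0 < emeasure (lebL L j) (D j)" if j: "j \<in> {1..d}" for j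
  proof (rule ccontr)
    assume "\<not> 0 < emeasure (lebL L j) (D j)"
    then have e0: "emeasure (lebL L j) (D j) = 0" by (simp add: zero_less_iff_neq_zero)
    then have nul: "D j \<in> null_sets (lebL L j)" using Ds[OF j] by (simp add: null_sets_def)
    have kz: "\<kappa> j i t = 0" for i t
    proof -
      have "AE t in lebL L j. indicator (D j) t *\<^sub>R (K j (distL L j t (\<xi> i j) / h j) / h j ^ L j) = (0::real)"
        using AE_not_in[OF nul] by eventually_elim simp
      then have "(LINT t:D j|lebL L j. K j (distL L j t (\<xi> i j) / h j) / h j ^ L j) = 0"
        unfolding set_lebesgue_integral_def by (rule integral_eq_zero_AE)
      moreover have "measure (lebL L j) (D j) = 0" using e0 by (simp add: measure_def)
      ultimately show ?thesis unfolding \<kappa>_def sbf_Kh_def Let_def by simp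
    qed
    have "sbf_p L D h K d n \<xi> (\<xi> i0) = 0" unfolding p_eq
    proof -
      have pz: "\<And>i. (\<Prod>m\<in>{1..d}. \<kappa> m i (\<xi> i0 m)) = 0"
        by (rule prod_zero) (use j kz in \<open>auto intro!: bexI[where x=j]\<close>)
      have "(\<Sum>i\<in>I. \<Prod>m\<in>{1..d}. \<kappa> m i (\<xi> i0 m)) = 0" by (simp only: pz sum.neutral_const)
      then show "a * (\<Sum>i\<in>I. \<Prod>m\<in>{1..d}. \<kappa> m i (\<xi> i0 m)) = 0" by simp
    qed
    moreover obtain c C where "0 < c" "\<forall>x. (\<forall>j\<in>{1..d}. x j \<in> D j) \<longrightarrow> c \<le> sbf_p L D h K d n \<xi> x \<and> sbf_p L D h K d n \<xi> x \<le> C"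
      using p_bounded by blast
    ultimately show False using x0D by force
  qed
  have "\<exists>b. \<forall>s\<in>{1..d} \<times> I. \<forall>t. (\<lambda>(j, i) t. \<kappa> j i t) s t \<le> b"
    by (rule finite_ub) (use finI Kh_bd h_pos K_cont Knn K_zero in \<open>auto simp: \<kappa>_def\<close>)
  then obtain B0 where B0: "\<And>j i t. j \<in> {1..d} \<Longrightarrow> i \<in> I \<Longrightarrow> \<kappa> j i t \<le> B0" by fastforce
  define B where "B = max B0 1"
  have kB: "\<And>j i t. j \<in> {1..d} \<Longrightarrow> i \<in> I \<Longrightarrow> \<kappa> j i t \<le> B" unfolding B_def using B0 by (meson le_max_iff_disj)
  have B1: "1 \<le> B" unfolding B_def by simp
  have kbB: "\<kappa> k i t \<le> B" if "k \<in> {1..d}" "i \<in> I" "t \<in> space (M k)" for k i t using kB that by blast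
  have kn: "\<And>j i t. j \<in> {1..d} \<Longrightarrow> 0 \<le> \<kappa> j i t" unfolding \<kappa>_def using Kh_nn h_pos Knn by blast
  obtain c Cp where c: "0 < c" and cp: "\<And>x. (\<forall>j\<in>{1..d}. x j \<in> D j) \<Longrightarrow> c \<le> sbf_p L D h K d n \<xi> x"
    using p_bounded by blast
  define \<eta> where "\<eta> = c / (a * real (card I) * B ^ d)"
  have cI: "0 < real (card I)" using finI Ine by (simp add: card_gt_0_iff)
  have eta_pos: "0 < \<eta>" unfolding \<eta>_def using c a_pos cI B1 by simp
  have cover: "\<exists>i\<in>I. \<forall>k\<in>{1..d}. \<eta> \<le> \<kappa> k i (x k)" if x: "\<And>k. k \<in> {1..d} \<Longrightarrow> x k \<in> D k" for x
  proof -
    have cle: "c \<le> a * (\<Sum>i\<in>I. \<Prod>j\<in>{1..d}. \<kappa> j i (x j))" using cp x p_eq by auto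
    have "\<exists>i\<in>I. c / (a * real (card I)) \<le> (\<Prod>j\<in>{1..d}. \<kappa> j i (x j))"
    proof (rule ccontr)
      assume "\<not> ?thesis"
      then have lt: "\<And>i. i \<in> I \<Longrightarrow> (\<Prod>j\<in>{1..d}. \<kappa> j i (x j)) < c / (a * real (card I))" by auto
      have "(\<Sum>i\<in>I. \<Prod>j\<in>{1..d}. \<kappa> j i (x j)) < (\<Sum>i\<in>I. c / (a * real (card I)))"
        by (rule sum_strict_mono[OF finI Ine lt])
      also have "\<dots> = c / a" using cI by simp
      finally have "a * (\<Sum>i\<in>I. \<Prod>j\<in>{1..d}. \<kappa> j i (x j)) < c" using a_pos by (simp add: field_simps)
      then show False using cle by simp
    qed
    then obtain i where i: "i \<in> I" and ci: "c / (a * real (card I)) \<le> (\<Prod>j\<in>{1..d}. \<kappa> j i (x j))" by blast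
    have "\<eta> \<le> \<kappa> k i (x k)" if k: "k \<in> {1..d}" for k
    proof -
      have pr: "(\<Prod>j\<in>{1..d}. \<kappa> j i (x j)) = \<kappa> k i (x k) * (\<Prod>j\<in>{1..d}-{k}. \<kappa> j i (x j))"
        by (rule prod.remove) (use k in auto)
      have "(\<Prod>j\<in>{1..d}-{k}. \<kappa> j i (x j)) \<le> (\<Prod>j\<in>{1..d}-{k}. B)"
        by (rule prod_mono) (use kn kB i in auto)
      also have "\<dots> = B ^ card ({1..d}-{k})" by simp
      also have "\<dots> \<le> B ^ d" by (rule power_increasing) (use B1 card_Diff1_le[of "{1..d}" k] in auto)
      finally have P: "(\<Prod>j\<in>{1..d}-{k}. \<kappa> j i (x j)) \<le> B ^ d" .
      have "c / (a * real (card I)) \<le> \<kappa> k i (x k) * B ^ d"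
        using ci unfolding pr by (rule order_trans) (rule mult_left_mono[OF P kn[OF k]])
      then show ?thesis unfolding \<eta>_def using a_pos cI B1 by (simp add: field_simps)
    qed
    then show ?thesis using i by blast
  qed
  have spM: "space (M k) = D k" if k: "k \<in> {1..d}" for k
  proof -
    have "D k \<subseteq> space (lebL L k)" using D_sub k unfolding lebL_space by blast
    then show ?thesis unfolding M_def space_restrict_space by blast
  qed
  have finM: "finite_measure (M k)" if k: "k \<in> {1..d}" for k
  proof -
    have DS: "D k \<inter> space (lebL L k) \<in> sets (lebL L k)" using Ds[OF k] by simp
    have "emeasure (M k) (space (M k)) = emeasure (lebL L k) (D k)"
      unfolding spM[OF k] unfolding M_def by (rule emeasure_restrict_space[OF DS]) simp
    then show ?thesis using Df[OF k] by (intro finite_measureI) simp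
  qed
  have kmeas: "\<kappa> k i \<in> borel_measurable (M k)" if k: "k \<in> {1..d}" and i: "i \<in> I" for k i
    unfolding M_def \<kappa>_def by (rule measurable_restrict_space1, rule Kh_meas) (use k h_pos K_cont in auto)
  have kint: "integral\<^sup>L (M k) (\<kappa> k i) = 1" if k: "k \<in> {1..d}" and i: "i \<in> I" for k i
    unfolding M_def \<kappa>_def by (rule Kh_int) (use k h_pos Knn Ds Dp Df in auto)
  have cover': "\<exists>i\<in>I. \<forall>k\<in>{1..d}. \<eta> \<le> \<kappa> k i (x k)" if "\<And>k. k \<in> {1..d} \<Longrightarrow> x k \<in> space (M k)" for x
    using cover spM that by auto
  interpret S: sbfc d I M \<kappa> a B \<eta>
    by (rule sbfc.intro[OF finI Ine a_pos eta_pos finM kmeas kn kbB kint cover'])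
  have spD: "\<And>k. k \<in> {1..d} \<Longrightarrow> D k \<inter> space (lebL L k) \<in> sets (lebL L k)" using Ds by simp
  have intR: "(LINT t:D k|lebL L k. g t) = integral\<^sup>L (M k) g" if k: "k \<in> {1..d}" for k and g :: "(nat \<Rightarrow> real) \<Rightarrow> 'h"
    unfolding set_lebesgue_integral_def M_def by (rule integral_restrict_space[symmetric, OF spD[OF k]])
  have p1_link: "sbf_p1 L D h K d n \<xi> j t = S.p1 j t" for j t unfolding p1_eq S.p1_def ..
  have proj_link: "sbf_proj L D h K d n \<xi> j k g x = S.PP j (\<lambda>i. S.mn k i g) x"
    if j: "j \<in> {1..d}" and k: "k \<in> {1..d}" and g: "S.good k g" and x: "x \<in> D j" for j k and g :: "(nat \<Rightarrow> real) \<Rightarrow> 'h" and x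
  proof -
    have xs: "x \<in> space (M j)" using spM[OF j] x by simp
    have pp: "sbf_p2 L D h K d n \<xi> j k x t / sbf_p1 L D h K d n \<xi> j x = (\<Sum>i\<in>I. S.psi j i x * \<kappa> k i t)" for t
      unfolding p2_eq p1_link S.psi_def by (simp add: sum_divide_distrib sum_distrib_left mult.assoc)
    have "sbf_proj L D h K d n \<xi> j k g x = (LINT t:D k|lebL L k. (\<Sum>i\<in>I. S.psi j i x * \<kappa> k i t) *\<^sub>R g t)"
      unfolding sbf_proj_def pp ..
    also have "\<dots> = integral\<^sup>L (M k) (\<lambda>t. (\<Sum>i\<in>I. S.psi j i x * \<kappa> k i t) *\<^sub>R g t)" by (rule intR[OF k])
    also have "\<dots> = integral\<^sup>L (M k) (\<lambda>t. (\<Sum>i\<in>I. S.psi j i x *\<^sub>R (\<kappa> k i t *\<^sub>R g t)))"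
      by (simp add: scaleR_sum_left)
    also have "\<dots> = (\<Sum>i\<in>I. integral\<^sup>L (M k) (\<lambda>t. S.psi j i x *\<^sub>R (\<kappa> k i t *\<^sub>R g t)))"
    proof (rule Bochner_Integration.integral_sum)
      fix i assume "i \<in> I"
      from S.good_int_kg[OF k this g] show "integrable (M k) (\<lambda>t. S.psi j i x *\<^sub>R (\<kappa> k i t *\<^sub>R g t))"
        by (intro integrable_scaleR_right)
    qed
    also have "\<dots> = S.PP j (\<lambda>i. S.mn k i g) x"
      unfolding S.PP_def S.mn_def by (intro sum.cong refl) (rule integral_scaleR_right)
    finally show ?thesis .
  qed
  have constr_gc: "S.good j g \<and> S.cons j g" if j: "j \<in> {1..d}" and cs: "sbf_constraint L D h K d n \<xi> j g" for j and g :: "(nat \<Rightarrow> real) \<Rightarrow> 'h"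
  proof -
    have gm[measurable]: "g \<in> borel_measurable (lebL L j)" and gz: "(LINT t:D j|lebL L j. sbf_p1 L D h K d n \<xi> j t *\<^sub>R g t) = 0"
      and gf: "(\<integral>\<^sup>+ t \<in> D j. ennreal ((norm (g t))\<^sup>2 * sbf_p1 L D h K d n \<xi> j t) \<partial>lebL L j) < \<infinity>"
      using cs unfolding sbf_constraint_def by auto
    have gmM: "g \<in> borel_measurable (M j)" unfolding M_def by (rule measurable_restrict_space1[OF gm])
    have p1m[measurable]: "(\<lambda>t. sbf_p1 L D h K d n \<xi> j t) \<in> borel_measurable (lebL L j)"
    proof -
      have [measurable]: "\<And>i. (\<lambda>t. \<kappa> j i t) \<in> borel_measurable (lebL L j)"
        unfolding \<kappa>_def by (rule Kh_meas) (use j h_pos K_cont in auto)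
      show ?thesis unfolding p1_eq by measurable
    qed
    have ae: "0 < a * \<eta>" using a_pos eta_pos by simp
    have "(\<integral>\<^sup>+ t. ennreal (norm ((norm (g t))\<^sup>2)) \<partial>M j) = (\<integral>\<^sup>+ t. ennreal ((norm (g t))\<^sup>2) * indicator (D j) t \<partial>lebL L j)"
      unfolding M_def by (simp add: nn_integral_restrict_space[OF spD[OF j]])
    also have "\<dots> \<le> (\<integral>\<^sup>+ t. ennreal (1 / (a * \<eta>)) * (ennreal ((norm (g t))\<^sup>2 * sbf_p1 L D h K d n \<xi> j t) * indicator (D j) t) \<partial>lebL L j)"
    proof (rule nn_integral_mono)
      fix t
      show "ennreal ((norm (g t))\<^sup>2) * indicator (D j) t \<le> ennreal (1 / (a * \<eta>)) * (ennreal ((norm (g t))\<^sup>2 * sbf_p1 L D h K d n \<xi> j t) * indicator (D j) t)"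
      proof (cases "t \<in> D j")
        case True
        have pl: "a * \<eta> \<le> sbf_p1 L D h K d n \<xi> j t" unfolding p1_link using S.p1_lower[OF j] spM[OF j] True by simp
        have "(norm (g t))\<^sup>2 \<le> (1 / (a * \<eta>)) * ((norm (g t))\<^sup>2 * sbf_p1 L D h K d n \<xi> j t)"
        proof -
          have "(norm (g t))\<^sup>2 * (a * \<eta>) \<le> (norm (g t))\<^sup>2 * sbf_p1 L D h K d n \<xi> j t" by (rule mult_left_mono[OF pl]) simp
          then show ?thesis using ae by (simp add: field_simps)
        qed
        then have "ennreal ((norm (g t))\<^sup>2) \<le> ennreal (1 / (a * \<eta>)) * ennreal ((norm (g t))\<^sup>2 * sbf_p1 L D h K d n \<xi> j t)"
          using ae by (simp add: ennreal_mult'[symmetric] ennreal_leI)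
        then show ?thesis using True by simp
      qed simp
    qed
    also have "\<dots> = ennreal (1 / (a * \<eta>)) * (\<integral>\<^sup>+ t \<in> D j. ennreal ((norm (g t))\<^sup>2 * sbf_p1 L D h K d n \<xi> j t) \<partial>lebL L j)"
      by (rule nn_integral_cmult) (use Ds[OF j] in measurable)
    also have "\<dots> < \<infinity>" using gf by (simp add: ennreal_mult_less_top)
    finally have "integrable (M j) (\<lambda>t. (norm (g t))\<^sup>2)" by (intro integrableI_bounded) (use gmM in measurable)
    then have good: "S.good j g" unfolding S.good_def using gmM by simp
    have "integral\<^sup>L (M j) (\<lambda>t. sbf_p1 L D h K d n \<xi> j t *\<^sub>R g t) = 0" using gz intR[OF j] by simp
    moreover have "integral\<^sup>L (M j) (\<lambda>t. sbf_p1 L D h K d n \<xi> j t *\<^sub>R g t) = a *\<^sub>R (\<Sum>i\<in>I. S.mn j i g)"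
    proof -
      have "integral\<^sup>L (M j) (\<lambda>t. sbf_p1 L D h K d n \<xi> j t *\<^sub>R g t) = integral\<^sup>L (M j) (\<lambda>t. \<Sum>i\<in>I. a *\<^sub>R (\<kappa> j i t *\<^sub>R g t))"
        unfolding p1_eq by (simp add: scaleR_sum_left scaleR_sum_right sum_distrib_left)
      also have "\<dots> = (\<Sum>i\<in>I. integral\<^sup>L (M j) (\<lambda>t. a *\<^sub>R (\<kappa> j i t *\<^sub>R g t)))"
      proof (rule Bochner_Integration.integral_sum)
        fix i assume "i \<in> I"
        from S.good_int_kg[OF j this good] show "integrable (M j) (\<lambda>t. a *\<^sub>R (\<kappa> j i t *\<^sub>R g t))"
          by (intro integrable_scaleR_right)
      qed
      also have "\<dots> = (\<Sum>i\<in>I. a *\<^sub>R S.mn j i g)" unfolding S.mn_def by (intro sum.cong refl) (rule integral_scaleR_right)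
      also have "\<dots> = a *\<^sub>R (\<Sum>i\<in>I. S.mn j i g)" by (simp only: scaleR_sum_right)
      finally show ?thesis .
    qed
    ultimately have "(\<Sum>i\<in>I. S.mn j i g) = 0" using a_pos by simp
    then show ?thesis using good unfolding S.cons_def by simp
  qed
  define G where "G = (\<lambda>r k t. F r k t - f k t)"
  have fgc: "\<And>k. k \<in> {1..d} \<Longrightarrow> S.good k (f k) \<and> S.cons k (f k)" using constr_gc f_constr by blast
  have F0gc: "\<And>k. k \<in> {1..d} \<Longrightarrow> S.good k (F 0 k) \<and> S.cons k (F 0 k)" using constr_gc F0_constr by blast
  have Fgood: "S.good k (F r k)" if k: "k \<in> {1..d}" and g: "S.good k (G r k)" for r k
  proof -
    have "S.good k (\<lambda>t. G r k t + f k t)" by (rule S.good_add) (use g fgc k in auto)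
    then show ?thesis by (rule S.good_cong) (simp add: G_def)
  qed
  have projd: "sbf_proj L D h K d n \<xi> j k (F r k) t - sbf_proj L D h K d n \<xi> j k (f k) t = S.PP j (\<lambda>i. S.mn k i (G r k)) t"
    if j: "j \<in> {1..d}" and k: "k \<in> {1..d}" and t: "t \<in> D j" and g: "S.good k (G r k)" for r j k t
  proof -
    have gF: "S.good k (F r k)" by (rule Fgood[OF k g])
    have gf: "S.good k (f k)" using fgc k by blast
    show ?thesis unfolding proj_link[OF j k gF t] proj_link[OF j k gf t] S.PP_diff
      by (rule S.PP_cong) (simp add: S.mn_diff[OF k _ gF gf] G_def)
  qed
  have rec_eq: "G (Suc r) j t = S.PP j (\<lambda>i. - ((\<Sum>k\<in>{1..<j}. S.mn k i (G (Suc r) k)) + (\<Sum>k\<in>{j<..d}. S.mn k i (G r k)))) t"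
    if j: "j \<in> {1..d}" and t: "t \<in> D j" and g1: "\<And>k. k \<in> {1..<j} \<Longrightarrow> S.good k (G (Suc r) k)"
      and g2: "\<And>k. k \<in> {j<..d} \<Longrightarrow> S.good k (G r k)" for r j t
  proof -
    let ?pr = "sbf_proj L D h K d n \<xi> j"
    have kJ1: "\<And>k. k \<in> {1..<j} \<Longrightarrow> k \<in> {1..d}" using j by auto
    have kJ2: "\<And>k. k \<in> {j<..d} \<Longrightarrow> k \<in> {1..d}" using j by auto
    have eF: "F (Suc r) j t = sbf_m L D h K d n \<xi> Y j t - sbf_f0 d n D \<xi> Y
                - (\<Sum>k\<in>{1..<j}. ?pr k (F (Suc r) k) t) - (\<Sum>k\<in>{j<..d}. ?pr k (F r k) t)"
      using F_iter j t by fastforce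
    have ef: "f j t = sbf_m L D h K d n \<xi> Y j t - sbf_f0 d n D \<xi> Y
                - (\<Sum>k\<in>{1..<j}. ?pr k (f k) t) - (\<Sum>k\<in>{j<..d}. ?pr k (f k) t)"
    proof -
      have "f j t = sbf_m L D h K d n \<xi> Y j t - sbf_f0 d n D \<xi> Y - (\<Sum>k\<in>{1..d} - {j}. ?pr k (f k) t)"
        using f_sol j t by blast
      then show ?thesis unfolding S.split_Jm[OF j, of "\<lambda>k. ?pr k (f k) t"] by (simp add: algebra_simps)
    qed
    have "G (Suc r) j t = - ((\<Sum>k\<in>{1..<j}. ?pr k (F (Suc r) k) t - ?pr k (f k) t) + (\<Sum>k\<in>{j<..d}. ?pr k (F r k) t - ?pr k (f k) t))"
      unfolding G_def eF ef by (simp add: sum_subtractf algebra_simps)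
    also have "\<dots> = - ((\<Sum>k\<in>{1..<j}. S.PP j (\<lambda>i. S.mn k i (G (Suc r) k)) t) + (\<Sum>k\<in>{j<..d}. S.PP j (\<lambda>i. S.mn k i (G r k)) t))"
      using projd[OF j kJ1 t g1] projd[OF j kJ2 t g2] by simp
    also have "\<dots> = S.PP j (\<lambda>i. - ((\<Sum>k\<in>{1..<j}. S.mn k i (G (Suc r) k)) + (\<Sum>k\<in>{j<..d}. S.mn k i (G r k)))) t"
      by (simp only: S.PP_sum finite_atLeastLessThan finite_greaterThanAtMost S.PP_add S.PP_minus)
    finally show ?thesis .
  qed
  have Ggood: "\<forall>k\<in>{1..d}. S.good k (G r k)" for r
  proof (induction r)
    case 0
    show ?case unfolding G_def using F0gc fgc by (auto intro!: S.good_diff)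
  next
    case (Suc r)
    have "S.good j (G (Suc r) j)" if "j \<in> {1..d}" for j
      using that
    proof (induction j rule: less_induct)
      case (less j)
      have "\<And>k. k \<in> {1..<j} \<Longrightarrow> S.good k (G (Suc r) k)" using less.IH less.prems by auto
      moreover have "\<And>k. k \<in> {j<..d} \<Longrightarrow> S.good k (G r k)" using Suc.IH less.prems by auto
      ultimately have "\<And>t. t \<in> space (M j) \<Longrightarrow> G (Suc r) j t = S.PP j (\<lambda>i. - ((\<Sum>k\<in>{1..<j}. S.mn k i (G (Suc r) k)) + (\<Sum>k\<in>{j<..d}. S.mn k i (G r k)))) t"
        using rec_eq[OF less.prems] spM[OF less.prems] by blast
      then show ?case by (rule S.good_cong[OF S.good_PP[OF less.prems]])
    qed
    then show ?case by blast
  qed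
  have sweep: "S.sweep (G r) (G (Suc r))" for r
    unfolding S.sweep_def
  proof (intro ballI)
    fix j t assume j: "j \<in> {1..d}" and t: "t \<in> space (M j)"
    show "G (Suc r) j t = S.PP j (\<lambda>i. - ((\<Sum>k\<in>{1..<j}. S.mn k i (G (Suc r) k)) + (\<Sum>k\<in>{j<..d}. S.mn k i (G r k)))) t"
      by (rule rec_eq[OF j]) (use t spM[OF j] Ggood j in auto)
  qed
  have G0: "S.good k (G 0 k) \<and> S.cons k (G 0 k)" if k: "k \<in> {1..d}" for k
  proof -
    have g: "S.good k (G 0 k)" using Ggood k by blast
    have "(\<Sum>i\<in>I. S.mn k i (G 0 k)) = (\<Sum>i\<in>I. S.mn k i (F 0 k) - S.mn k i (f k))"
      unfolding G_def by (rule sum.cong[OF refl]) (rule S.mn_diff[OF k], use F0gc fgc k in auto)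
    also have "\<dots> = 0" using F0gc[OF k] fgc[OF k] unfolding S.cons_def by (simp add: sum_subtractf)
    finally show ?thesis using g unfolding S.cons_def by simp
  qed
  obtain C \<rho> where C: "0 < C" and \<rho>: "0 < \<rho>" "\<rho> < 1"
    and nb: "\<And>r j. j \<in> {1..d} \<Longrightarrow> S.nrm j (G r j) \<le> C * \<rho> ^ r"
    and sb: "\<And>r j t. j \<in> {1..d} \<Longrightarrow> t \<in> space (M j) \<Longrightarrow> norm (G (Suc r) j t) \<le> C * \<rho> ^ r"
    using S.core_main[of G, OF G0 sweep] by blast
  define c2 where "c2 = C / (a * \<eta>)"
  have c2pos: "0 < c2" unfolding c2_def using C a_pos eta_pos by simp
  have part1: "(\<integral>\<^sup>+ x \<in> D j. ennreal ((norm (F r j x - f j x))\<^sup>2) \<partial>lebL L j) \<le> ennreal (c2 * \<rho> ^ r)"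
    if j: "j \<in> {1..d}" for j r
  proof -
    have g: "S.good j (G r j)" using Ggood j by blast
    then have int: "integrable (M j) (\<lambda>t. (norm (G r j t))\<^sup>2)" unfolding S.good_def by blast
    have "(\<integral>\<^sup>+ x \<in> D j. ennreal ((norm (F r j x - f j x))\<^sup>2) \<partial>lebL L j) = (\<integral>\<^sup>+ x. ennreal ((norm (G r j x))\<^sup>2) \<partial>M j)"
      unfolding M_def G_def by (simp add: nn_integral_restrict_space[OF spD[OF j]])
    also have "\<dots> = ennreal (\<integral>x. (norm (G r j x))\<^sup>2 \<partial>M j)" by (rule nn_integral_eq_integral[OF int]) simp
    also have "\<dots> \<le> ennreal (c2 * \<rho> ^ r)"
    proof (rule ennreal_leI)
      have "a * \<eta> * (\<integral>x. (norm (G r j x))\<^sup>2 \<partial>M j) \<le> S.nrm j (G r j)" by (rule S.nrm_lower[OF j g])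
      also have "\<dots> \<le> C * \<rho> ^ r" by (rule nb[OF j])
      finally show "(\<integral>x. (norm (G r j x))\<^sup>2 \<partial>M j) \<le> c2 * \<rho> ^ r" unfolding c2_def using a_pos eta_pos by (simp add: field_simps)
    qed
    finally show ?thesis .
  qed
  have geo: "(\<lambda>r. C * \<rho> ^ r) \<longlonglongrightarrow> 0" using \<rho> by (intro tendsto_mult_right_zero LIMSEQ_power_zero) auto
  have sbD: "norm (F (Suc r) j x - f j x) \<le> C * \<rho> ^ r" if j: "j \<in> {1..d}" and x: "x \<in> D j" for j x r
    using sb[OF j] spM[OF j] x unfolding G_def by simp
  have lim: "(\<lambda>r. norm (F r j x - f j x)) \<longlonglongrightarrow> 0" if j: "j \<in> {1..d}" and x: "x \<in> D j" for j x
  proof -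
    have "(\<lambda>r. norm (F (Suc r) j x - f j x)) \<longlonglongrightarrow> 0"
      by (rule tendsto_sandwich[OF _ _ tendsto_const geo]) (use sbD[OF j x] in auto)
    then show ?thesis by (rule LIMSEQ_imp_Suc)
  qed
  have unif: "uniform_limit (D j) (\<lambda>r. F r j) (f j) sequentially" if j: "j \<in> {1..d}" for j
  proof (rule uniform_limitI)
    fix e :: real assume e: "0 < e"
    have "eventually (\<lambda>r. C * \<rho> ^ r < e) sequentially" using geo e by (rule order_tendstoD(2))
    then have "eventually (\<lambda>r. \<forall>x\<in>D j. dist (F (Suc r) j x) (f j x) < e) sequentially"
      by eventually_elim (use sbD[OF j] in \<open>auto simp: dist_norm intro: le_less_trans\<close>)
    then show "eventually (\<lambda>r. \<forall>x\<in>D j. dist (F r j x) (f j x) < e) sequentially"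
      using eventually_sequentially_Suc[of "\<lambda>r. \<forall>x\<in>D j. dist (F r j x) (f j x) < e"] by simp
  qed
  show ?thesis
  proof (intro conjI)
    show "\<exists>c2 \<rho>2. c2 > 0 \<and> 0 < \<rho>2 \<and> \<rho>2 < 1 \<and>
            (\<forall>j\<in>{1..d}. \<forall>r. (\<integral>\<^sup>+ x \<in> D j. ennreal ((norm (F r j x - f j x))\<^sup>2) \<partial>lebL L j) \<le> ennreal (c2 * \<rho>2 ^ r))"
      using c2pos \<rho> part1 by blast
    show "\<forall>j\<in>{1..d}. AE x in lebL L j. x \<in> D j \<longrightarrow> (\<lambda>r. norm (F r j x - f j x)) \<longlonglongrightarrow> 0"
      using lim by (auto intro!: AE_I2)
    show "\<forall>j\<in>{1..d}. \<forall>\<epsilon>>0. \<exists>S. S \<in> sets (lebL L j) \<and> S \<subseteq> D j \<and>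
               emeasure (lebL L j) (D j - S) < ennreal \<epsilon> \<and> uniform_limit S (\<lambda>r. F r j) (f j) sequentially"
    proof (intro ballI allI impI)
      fix j and \<epsilon> :: real assume j: "j \<in> {1..d}" and e: "0 < \<epsilon>"
      show "\<exists>S. S \<in> sets (lebL L j) \<and> S \<subseteq> D j \<and> emeasure (lebL L j) (D j - S) < ennreal \<epsilon> \<and> uniform_limit S (\<lambda>r. F r j) (f j) sequentially"
        by (rule exI[of _ "D j"]) (use Ds[OF j] e unif[OF j] in auto)
    qed
  qed
qed





end
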